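(* Let $I^\bullet$ be a bounded complex of free modules in $\mathcal{M}_\Lambda$ with $F_0I^\bullet=0$. Then for any bounded complex $K^\bullet$ of modules in $\mathcal{M}_\Lambda$, the maps induced by the inclusion $\sigma K^\bullet\hookrightarrow K^\bullet$, $$\mathrm{Hom}_{\mathbf{C}(\Lambda)}(K^\bullet,I^\bullet)\to\mathrm{Hom}_{\mathbf{C}(\Lambda)}(\sigma K^\bullet,I^\bullet)\quad\text{and}\quad \mathrm{Hom}_{\mathbf{K}(\Lambda)}(K^\bullet,I^\bullet)\to\mathrm{Hom}_{\mathbf{K}(\Lambda)}(\sigma K^\bullet,I^\bullet),$$ are isomorphisms.
   Context: Let $k$ be a field, $n\ge2$, $V$ a $k$-vector space of dimension $n+1$, $\Lambda=\bigoplus_{d\ge0}\Lambda^dV$ the exterior algebra graded by $\Lambda_d=\Lambda^dV$. $\mathcal{M}_\Lambda$ is the category of finitely generated graded right $\Lambda$-modules; $N(a)_i=N_{a+i}$; $N^\vee_i=(N_{-i})^*$, so $\Lambda^\vee_i=\Lambda^{-i}V^*$. A free module is a finite direct sum of modules $\Lambda^\vee(a)$. $\mathbf{C}(\Lambda)$ and $\mathbf{K}(\Lambda)$ are the category of complexes in $\mathcal{M}_\Lambda$ and its homotopy category. For $N$ in $\mathcal{M}_\Lambda$ and $d\in\mathbb{Z}$, $N_{\le d}$ (resp. $N_{\ge d}$) denotes the submodule generated by the homogeneous elements of degree $\le d$ (resp. $\ge d$). For a complex $I^\bullet$ of free modules, $F_jI^p:=I^p_{\le j-p-n-1}$ (if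 $I^p=\bigoplus_iH^i_{p-i}\otimes\Lambda^\vee(p-i)$ then $F_jI^p=\bigoplus_{i\le j}H^i_{p-i}\otimes\Lambda^\vee(p-i)$); $F_0I^\bullet=0$ means $F_0I^p=0$ for all $p$. For a complex $K^\bullet$, $\sigma K^\bullet$ is the subcomplex with $\sigma K^p=K^p_{\ge -p}$. *)

theory Defs
  imports "Jordan_Normal_Form.Matrix"
begin

text \<open>V = k^(n+1) with basis e_0,...,e_n; Lambda is the exterior
algebra on V.  A finitely generated graded right Lambda-module N is encoded by
the dimensions of its (finite-dimensional) homogeneous components N_i = k^(dims N i)
(finitely many nonzero) and by the matrices of right multiplication by the
generators e_j : N_i -> N_(i+1) (acting on column vectors), subject to the defining
relations of the exterior algebra.\<close>

record 'k gmod =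
  dims :: "int \<Rightarrow> nat"
  acts :: "nat \<Rightarrow> int \<Rightarrow> 'k mat"

definition gmod_wf :: "nat \<Rightarrow> 'k::field gmod \<Rightarrow> bool" where
  "gmod_wf n M \<longleftrightarrow>
     finite {i. dims M i \<noteq> 0} \<and>
     (\<forall>j\<le>n. \<forall>i. acts M j i \<in> carrier_mat (dims M (i+1)) (dims M i)) \<and>
     (\<forall>j\<le>n. \<forall>l\<le>n. \<forall>i. acts M l (i+1) * acts M j i = - (acts M j (i+1) * acts M l i)) \<and>
     (\<forall>j\<le>n. \<forall>i. acts M j (i+1) * acts M j i = 0\<^sub>m (dims M (i+2)) (dims M i))"

definition gmap :: "nat \<Rightarrow> 'k::field gmod \<Rightarrow> 'k gmod \<Rightarrow> (int \<Rightarrow> 'k mat) \<Rightarrow> bool" where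
  "gmap n M N f \<longleftrightarrow>
     (\<forall>i. f i \<in> carrier_mat (dims N i) (dims M i)) \<and>
     (\<forall>j\<le>n. \<forall>i. f (i+1) * acts M j i = acts N j i * f i)"

definition giso :: "nat \<Rightarrow> 'k::field gmod \<Rightarrow> 'k gmod \<Rightarrow> bool" where
  "giso n M N \<longleftrightarrow> (\<exists>f g. gmap n M N f \<and> gmap n N M g \<and>
      (\<forall>i. g i * f i = 1\<^sub>m (dims M i)) \<and> (\<forall>i. f i * g i = 1\<^sub>m (dims N i)))"

definition subs :: "nat \<Rightarrow> int \<Rightarrow> nat list list" where
  "subs n m = (if m < 0 then [] else filter (\<lambda>xs. length xs = nat m) (subseqs [0..<Suc n]))"

text \<open>The module Lambda^vee(a): (Lambda^vee(a))_i = (Lambda^(-a-i) V)^*, with basis the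
dual basis e_S^* (|S| = -a-i) and right action (phi . lambda)(mu) = phi(lambda mu),
so e_S^* . e_j = (-1)^{#{s in S. s < j}} e_(S-{j})^* if j in S, and 0 otherwise.\<close>
definition lamdual :: "nat \<Rightarrow> int \<Rightarrow> 'k::field gmod" where
  "lamdual n a =
    \<lparr> dims = (\<lambda>i. length (subs n (- a - i))),
      acts = (\<lambda>j i. mat (length (subs n (- a - i - 1))) (length (subs n (- a - i)))
        (\<lambda>(r, c). let S = set (subs n (- a - i) ! c); T = set (subs n (- a - i - 1) ! r) in
           if j \<in> S \<and> T = S - {j} then (- 1) ^ card {s\<in>S. s < j} else 0)) \<rparr>"

definition gsum :: "'k::field gmod \<Rightarrow> 'k gmod \<Rightarrow> 'k gmod" where
  "gsum M N = \<lparr> dims = (\<lambda>i. dims M i + dims N i),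
     acts = (\<lambda>j i. four_block_mat (acts M j i) (0\<^sub>m (dims M (i+1)) (dims N i))
                                  (0\<^sub>m (dims N (i+1)) (dims M i)) (acts N j i)) \<rparr>"

definition gzero :: "'k::field gmod" where
  "gzero = \<lparr> dims = (\<lambda>i. 0), acts = (\<lambda>j i. 0\<^sub>m 0 0) \<rparr>"

definition free_gmod :: "nat \<Rightarrow> 'k::field gmod \<Rightarrow> bool" where
  "free_gmod n M \<longleftrightarrow> (\<exists>as. giso n M (foldr (\<lambda>a R. gsum (lamdual n a) R) as gzero))"

text \<open>Complexes in M_Lambda: modules C^p, differentials d^p : C^p -> C^(p+1)
(component d^p_i on degree i).\<close>
record 'k cplx =
  cmod :: "int \<Rightarrow> 'k gmod"
  cdiff :: "int \<Rightarrow> int \<Rightarrow> 'k mat"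

definition cplx_wf :: "nat \<Rightarrow> 'k::field cplx \<Rightarrow> bool" where
  "cplx_wf n C \<longleftrightarrow>
     (\<forall>p. gmod_wf n (cmod C p)) \<and>
     (\<forall>p. gmap n (cmod C p) (cmod C (p+1)) (cdiff C p)) \<and>
     (\<forall>p i. cdiff C (p+1) i * cdiff C p i = 0\<^sub>m (dims (cmod C (p+2)) i) (dims (cmod C p) i))"

definition bounded_cplx :: "'k::field cplx \<Rightarrow> bool" where
  "bounded_cplx C \<longleftrightarrow> finite {p. \<exists>i. dims (cmod C p) i \<noteq> 0}"

definition HomC :: "nat \<Rightarrow> 'k::field cplx \<Rightarrow> 'k cplx \<Rightarrow> (int \<Rightarrow> int \<Rightarrow> 'k mat) set" where
  "HomC n K L = {f. (\<forall>p. gmap n (cmod K p) (cmod L p) (f p)) \<and>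
       (\<forall>p i. f (p+1) i * cdiff K p i = cdiff L p i * f p i)}"

definition cm_comp :: "(int \<Rightarrow> int \<Rightarrow> 'k::field mat) \<Rightarrow> (int \<Rightarrow> int \<Rightarrow> 'k mat) \<Rightarrow> (int \<Rightarrow> int \<Rightarrow> 'k mat)" where
  "cm_comp g f = (\<lambda>p i. g p i * f p i)"

definition htp :: "nat \<Rightarrow> 'k::field cplx \<Rightarrow> 'k cplx \<Rightarrow> ((int \<Rightarrow> int \<Rightarrow> 'k mat) \<times> (int \<Rightarrow> int \<Rightarrow> 'k mat)) set" where
  "htp n K L = {(f, g). f \<in> HomC n K L \<and> g \<in> HomC n K L \<and>
      (\<exists>h. (\<forall>p. gmap n (cmod K p) (cmod L (p-1)) (h p)) \<and>
           (\<forall>p i. f p i - g p i = cdiff L (p-1) i * h p i + h (p+1) i * cdiff K p i))}"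

definition HomK :: "nat \<Rightarrow> 'k::field cplx \<Rightarrow> 'k cplx \<Rightarrow> (int \<Rightarrow> int \<Rightarrow> 'k mat) set set" where
  "HomK n K L = HomC n K L // htp n K L"

text \<open>sigma K: sigma K^p = K^p_{>= -p}.  Since Lambda is non-negatively graded, the
submodule generated by homogeneous elements of degree >= -p is the sum of the
components of degree >= -p.\<close>
definition sigma :: "'k::field cplx \<Rightarrow> 'k cplx" where
  "sigma K = \<lparr> cmod = (\<lambda>p.
       \<lparr> dims = (\<lambda>i. if - p \<le> i then dims (cmod K p) i else 0),
         acts = (\<lambda>j i. if - p \<le> i then acts (cmod K p) j i
                       else 0\<^sub>m (if - p \<le> i + 1 then dims (cmod K p) (i+1) else 0) 0) \<rparr>),
     cdiff = (\<lambda>p i. if - p \<le> i then cdiff K p i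
                    else 0\<^sub>m (if - (p+1) \<le> i then dims (cmod K (p+1)) i else 0) 0) \<rparr>"

definition incl :: "'k::field cplx \<Rightarrow> int \<Rightarrow> int \<Rightarrow> 'k mat" where
  "incl K = (\<lambda>p i. if - p \<le> i then 1\<^sub>m (dims (cmod K p) i) else 0\<^sub>m (dims (cmod K p) i) 0)"

text \<open>F_0 I = 0: F_0 I^p = I^p_{<= -p-n-1}, the submodule generated by homogeneous
elements of degree <= -p-n-1; it vanishes iff those components vanish.\<close>
definition F0_zero :: "nat \<Rightarrow> 'k::field cplx \<Rightarrow> bool" where
  "F0_zero n I \<longleftrightarrow> (\<forall>p i. i \<le> - p - int n - 1 \<longrightarrow> dims (cmod I p) i = 0)"

end

theory Submission
  imports Defs
begin

lemma mat_zero_cols: "A \<in> carrier_mat r 0 \<Longrightarrow> A = 0\<^sub>m r 0"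
  by (intro eq_matI) auto

lemma mat_eq_colI:
  assumes "A \<in> carrier_mat r c" "B \<in> carrier_mat r c" "\<And>k. k < c \<Longrightarrow> col A k = col B k"
  shows "A = B"
proof (rule eq_matI)
  fix i j assume ij: "i < dim_row B" "j < dim_col B"
  then have ij': "i < r" "j < c" using assms by auto
  have "col A j $ i = col B j $ i" using assms(3) ij' by simp
  moreover have "col A j $ i = A $$ (i, j)" using assms(1) ij' by (simp add: carrier_matD)
  moreover have "col B j $ i = B $$ (i, j)" using assms(2) ij' by (simp add: carrier_matD)
  ultimately show "A $$ (i, j) = B $$ (i, j)" by simp
qed (use assms in auto)

lemma vec_minus_eq0:
  fixes v w :: "'a::ab_group_add vec"
  assumes "v \<in> carrier_vec n" "w \<in> carrier_vec n" "v - w = 0\<^sub>v n" shows "v = w"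
proof (rule eq_vecI)
  fix k assume "k < dim_vec w"
  then have k: "k < n" using assms by auto
  have "(v - w) $ k = v $ k - w $ k" using assms(1,2) k by simp
  moreover have "(v - w) $ k = 0" using assms(3) k by simp
  ultimately show "v $ k = w $ k" using right_minus_eq by metis
qed (use assms in auto)

definition soc :: "nat \<Rightarrow> 'k::field gmod \<Rightarrow> int \<Rightarrow> bool" where
  "soc n M D \<longleftrightarrow> (\<forall>i<D. \<forall>y\<in>carrier_vec (dims M i).
      (\<forall>j\<le>n. acts M j i *\<^sub>v y = 0\<^sub>v (dims M (i+1))) \<longrightarrow> y = 0\<^sub>v (dims M i))"

definition solv :: "nat \<Rightarrow> 'k::field gmod \<Rightarrow> bool" where
  "solv n M \<longleftrightarrow> (\<forall>i z. (\<forall>j\<le>n. z j \<in> carrier_vec (dims M (i+1))) \<longrightarrow>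
      (\<forall>j\<le>n. \<forall>l\<le>n. acts M l (i+1) *\<^sub>v z j = - (acts M j (i+1) *\<^sub>v z l)) \<longrightarrow>
      (\<forall>j\<le>n. acts M j (i+1) *\<^sub>v z j = 0\<^sub>v (dims M (i+2))) \<longrightarrow>
      (\<exists>y\<in>carrier_vec (dims M i). \<forall>j\<le>n. acts M j i *\<^sub>v y = z j))"

definition acar :: "nat \<Rightarrow> 'k::field gmod \<Rightarrow> bool" where
  "acar n M \<longleftrightarrow> (\<forall>j\<le>n. \<forall>i. acts M j i \<in> carrier_mat (dims M (i+1)) (dims M i))"

lemma wf_acar: "gmod_wf n M \<Longrightarrow> acar n M"
  unfolding gmod_wf_def acar_def by auto

lemma acarD: "acar n M \<Longrightarrow> j \<le> n \<Longrightarrow> acts M j i \<in> carrier_mat (dims M (i+1)) (dims M i)"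
  unfolding acar_def by auto

lemma gmapD1: "gmap n M N f \<Longrightarrow> f i \<in> carrier_mat (dims N i) (dims M i)"
  unfolding gmap_def by auto

lemma gmapD2: "gmap n M N f \<Longrightarrow> j \<le> n \<Longrightarrow> f (i+1) * acts M j i = acts N j i * f i"
  unfolding gmap_def by auto

lemma gmap_unique_step:
  assumes soc: "soc n M D" and aM: "acar n M" and aX: "acar n X"
    and F: "gmap n X M F" and G: "gmap n X M G" and i: "i < D" and eq: "F (i+1) = G (i+1)"
  shows "F i = G i"
proof (rule mat_eq_colI[OF gmapD1[OF F] gmapD1[OF G]])
  fix c assume c: "c < dims X i"
  define y where "y = col (F i) c - col (G i) c"
  have Fi: "F i \<in> carrier_mat (dims M i) (dims X i)" by (rule gmapD1[OF F])
  have Gi: "G i \<in> carrier_mat (dims M i) (dims X i)" by (rule gmapD1[OF G])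
  have Fi1: "F (i+1) \<in> carrier_mat (dims M (i+1)) (dims X (i+1))" by (rule gmapD1[OF F])
  have y: "y \<in> carrier_vec (dims M i)" unfolding y_def using Fi Gi c by auto
  have "\<forall>j\<le>n. acts M j i *\<^sub>v y = 0\<^sub>v (dims M (i+1))"
  proof (intro allI impI)
    fix j assume j: "j \<le> n"
    have A: "acts M j i \<in> carrier_mat (dims M (i+1)) (dims M i)" using acarD[OF aM j] .
    have AX: "acts X j i \<in> carrier_mat (dims X (i+1)) (dims X i)" using acarD[OF aX j] .
    have "acts M j i *\<^sub>v y = acts M j i *\<^sub>v col (F i) c - acts M j i *\<^sub>v col (G i) c"
      unfolding y_def using A Fi Gi c by (subst mult_minus_distrib_mat_vec[OF A]) auto
    also have "acts M j i *\<^sub>v col (F i) c = col (acts M j i * F i) c" using col_mult2[OF A Fi c] by simp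
    also have "acts M j i *\<^sub>v col (G i) c = col (acts M j i * G i) c" using col_mult2[OF A Gi c] by simp
    also have "acts M j i * F i = F (i+1) * acts X j i" using gmapD2[OF F j] by simp
    also have "acts M j i * G i = G (i+1) * acts X j i" using gmapD2[OF G j] by simp
    finally have e: "acts M j i *\<^sub>v y = col (F (i+1) * acts X j i) c - col (G (i+1) * acts X j i) c" .
    have "col (F (i+1) * acts X j i) c \<in> carrier_vec (dims M (i+1))" using Fi1 AX c by simp
    then show "acts M j i *\<^sub>v y = 0\<^sub>v (dims M (i+1))" unfolding e eq by (rule minus_cancel_vec[unfolded eq])
  qed
  then have "y = 0\<^sub>v (dims M i)" using soc i y unfolding soc_def by auto
  moreover have "col (F i) c \<in> carrier_vec (dims M i)" "col (G i) c \<in> carrier_vec (dims M i)" using Fi Gi c by simp_all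
  ultimately show "col (F i) c = col (G i) c" unfolding y_def using vec_minus_eq0 by blast
qed

lemma gmap_unique:
  assumes soc: "soc n M D" and aM: "acar n M" and aX: "acar n X"
    and F: "gmap n X M F" and G: "gmap n X M G" and eq: "\<And>i. i \<ge> D \<Longrightarrow> F i = G i"
  shows "F i = G i"
proof -
  have "\<forall>i. i \<ge> D - int k \<longrightarrow> F i = G i" for k
  proof (induction k)
    case 0 then show ?case using eq by simp
  next
    case (Suc k)
    show ?case
    proof (intro allI impI)
      fix i assume "i \<ge> D - int (Suc k)"
      show "F i = G i"
      proof (cases "i \<ge> D - int k")
        case True then show ?thesis using Suc by auto
      next
        case False
        then have "i + 1 \<ge> D - int k" "i < D" using \<open>i \<ge> D - int (Suc k)\<close> by auto
        then show ?thesis using gmap_unique_step[OF soc aM aX F G] Suc by auto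
      qed
    qed
  qed
  note this[rule_format, of "nat (D - i)" i]
  then show ?thesis by (cases "i \<ge> D") (auto simp: eq)
qed


definition stp :: "nat \<Rightarrow> 'k::field gmod \<Rightarrow> 'k gmod \<Rightarrow> int \<Rightarrow> 'k mat \<Rightarrow> 'k mat" where
  "stp n X M i Gn = mat (dims M i) (dims X i) (\<lambda>(r,c). (SOME y. y \<in> carrier_vec (dims M i) \<and>
      (\<forall>j\<le>n. acts M j i *\<^sub>v y = Gn *\<^sub>v col (acts X j i) c)) $ r)"

lemma stp_ok:
  assumes wfX: "gmod_wf n X" and aM: "acar n M" and sv: "solv n M"
    and Gn: "Gn \<in> carrier_mat (dims M (i+1)) (dims X (i+1))"
    and Gnn: "Gnn \<in> carrier_mat (dims M (i+2)) (dims X (i+2))"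
    and comm: "\<forall>j\<le>n. Gnn * acts X j (i+1) = acts M j (i+1) * Gn"
  shows "stp n X M i Gn \<in> carrier_mat (dims M i) (dims X i)"
    and "\<forall>j\<le>n. Gn * acts X j i = acts M j i * stp n X M i Gn"
proof -
  have aX: "acar n X" using wfX by (rule wf_acar)
  have wf2: "\<forall>j\<le>n. \<forall>l\<le>n. acts X l (i+1) * acts X j i = - (acts X j (i+1) * acts X l i)"
    using wfX unfolding gmod_wf_def by blast
  have wf3: "\<forall>j\<le>n. acts X j (i+1) * acts X j i = 0\<^sub>m (dims X (i+2)) (dims X i)"
    using wfX unfolding gmod_wf_def by blast
  let ?P = "\<lambda>c y. y \<in> carrier_vec (dims M i) \<and> (\<forall>j\<le>n. acts M j i *\<^sub>v y = Gn *\<^sub>v col (acts X j i) c)"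
  have ex: "\<exists>y. ?P c y" if c: "c < dims X i" for c
  proof -
    define z where "z j = Gn *\<^sub>v col (acts X j i) c" for j
    have zc: "\<forall>j\<le>n. z j \<in> carrier_vec (dims M (i+1))"
    proof (intro allI impI)
      fix j assume j: "j \<le> n"
      show "z j \<in> carrier_vec (dims M (i+1))" unfolding z_def using Gn acarD[OF aX j, of i] c by simp
    qed
    have key: "acts M l (i+1) *\<^sub>v z j = Gnn *\<^sub>v col (acts X l (i+1) * acts X j i) c"
      if j: "j \<le> n" and l: "l \<le> n" for j l
    proof -
      have AMl: "acts M l (i+1) \<in> carrier_mat (dims M (i+2)) (dims M (i+1))"
        using acarD[OF aM l, of "i+1"] by (simp add: add.assoc)
      have AXl: "acts X l (i+1) \<in> carrier_mat (dims X (i+2)) (dims X (i+1))"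
        using acarD[OF aX l, of "i+1"] by (simp add: add.assoc)
      have AXj: "acts X j i \<in> carrier_mat (dims X (i+1)) (dims X i)" using acarD[OF aX j] .
      have cc: "col (acts X j i) c \<in> carrier_vec (dims X (i+1))" using AXj c by simp
      have "acts M l (i+1) *\<^sub>v z j = (acts M l (i+1) * Gn) *\<^sub>v col (acts X j i) c"
        unfolding z_def using AMl Gn cc by simp
      also have "acts M l (i+1) * Gn = Gnn * acts X l (i+1)" using comm l by simp
      also have "(Gnn * acts X l (i+1)) *\<^sub>v col (acts X j i) c = Gnn *\<^sub>v (acts X l (i+1) *\<^sub>v col (acts X j i) c)"
        using Gnn AXl cc by simp
      also have "acts X l (i+1) *\<^sub>v col (acts X j i) c = col (acts X l (i+1) * acts X j i) c"
        using col_mult2[OF AXl AXj c] by simp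
      finally show ?thesis .
    qed
    have h1: "\<forall>j\<le>n. \<forall>l\<le>n. acts M l (i+1) *\<^sub>v z j = - (acts M j (i+1) *\<^sub>v z l)"
    proof (intro allI impI)
      fix j l assume j: "j \<le> n" and l: "l \<le> n"
      have AXl: "acts X l i \<in> carrier_mat (dims X (i+1)) (dims X i)" using acarD[OF aX l] .
      have AXj: "acts X j (i+1) \<in> carrier_mat (dims X (i+2)) (dims X (i+1))"
        using acarD[OF aX j, of "i+1"] by (simp add: add.assoc)
      have P: "acts X j (i+1) * acts X l i \<in> carrier_mat (dims X (i+2)) (dims X i)" using AXl AXj by simp
      have "acts M l (i+1) *\<^sub>v z j = Gnn *\<^sub>v col (- (acts X j (i+1) * acts X l i)) c"
        using key[OF j l] wf2[rule_format, OF j l] by metis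
      also have "col (- (acts X j (i+1) * acts X l i)) c = - col (acts X j (i+1) * acts X l i) c"
        by (rule col_uminus) (use P c in auto)
      also have "Gnn *\<^sub>v (- col (acts X j (i+1) * acts X l i) c) = - (Gnn *\<^sub>v col (acts X j (i+1) * acts X l i) c)"
        using P c Gnn by (intro eq_vecI) auto
      also have "Gnn *\<^sub>v col (acts X j (i+1) * acts X l i) c = acts M j (i+1) *\<^sub>v z l"
        using key[OF l j] by simp
      finally show "acts M l (i+1) *\<^sub>v z j = - (acts M j (i+1) *\<^sub>v z l)" .
    qed
    have h2: "\<forall>j\<le>n. acts M j (i+1) *\<^sub>v z j = 0\<^sub>v (dims M (i+2))"
    proof (intro allI impI)
      fix j assume j: "j \<le> n"
      have "acts M j (i+1) *\<^sub>v z j = Gnn *\<^sub>v col (0\<^sub>m (dims X (i+2)) (dims X i)) c"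
        using key[OF j j] wf3 j by simp
      also have "\<dots> = 0\<^sub>v (dims M (i+2))" using Gnn c by (intro eq_vecI) auto
      finally show "acts M j (i+1) *\<^sub>v z j = 0\<^sub>v (dims M (i+2))" .
    qed
    obtain y where "y \<in> carrier_vec (dims M i)" "\<forall>j\<le>n. acts M j i *\<^sub>v y = z j"
      using sv zc h1 h2 unfolding solv_def by blast
    then show ?thesis unfolding z_def by blast
  qed
  have colst: "col (stp n X M i Gn) c = (SOME y. ?P c y)" if c: "c < dims X i" for c
  proof -
    have "?P c (SOME y. ?P c y)" using someI_ex[OF ex[OF c]] .
    then have "(SOME y. ?P c y) \<in> carrier_vec (dims M i)" by blast
    then show ?thesis unfolding stp_def using c by (intro eq_vecI) auto
  qed
  show st: "stp n X M i Gn \<in> carrier_mat (dims M i) (dims X i)" unfolding stp_def by simp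
  show "\<forall>j\<le>n. Gn * acts X j i = acts M j i * stp n X M i Gn"
  proof (intro allI impI)
    fix j assume j: "j \<le> n"
    have AXj: "acts X j i \<in> carrier_mat (dims X (i+1)) (dims X i)" using acarD[OF aX j] .
    have AMj: "acts M j i \<in> carrier_mat (dims M (i+1)) (dims M i)" using acarD[OF aM j] .
    show "Gn * acts X j i = acts M j i * stp n X M i Gn"
    proof (rule mat_eq_colI[of _ "dims M (i+1)" "dims X i"])
      show "Gn * acts X j i \<in> carrier_mat (dims M (i + 1)) (dims X i)" using Gn AXj by simp
      show "acts M j i * stp n X M i Gn \<in> carrier_mat (dims M (i + 1)) (dims X i)" using AMj st by simp
      fix c assume c: "c < dims X i"
      have "?P c (SOME y. ?P c y)" using someI_ex[OF ex[OF c]] .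
      then have "acts M j i *\<^sub>v (SOME y. ?P c y) = Gn *\<^sub>v col (acts X j i) c" using j by blast
      then show "col (Gn * acts X j i) c = col (acts M j i * stp n X M i Gn) c"
        using col_mult2[OF Gn AXj c] col_mult2[OF AMj st c] colst[OF c] by simp
    qed
  qed
qed

lemma gmap_ext:
  assumes wfX: "gmod_wf n X" and aM: "acar n M" and sv: "solv n M"
    and G1: "\<And>i. i \<ge> D \<Longrightarrow> G i \<in> carrier_mat (dims M i) (dims X i)"
    and G2: "\<And>i j. i \<ge> D \<Longrightarrow> j \<le> n \<Longrightarrow> G (i+1) * acts X j i = acts M j i * G i"
  shows "\<exists>F. gmap n X M F \<and> (\<forall>i\<ge>D. F i = G i)"
proof -
  define E where "E = rec_nat (G D) (\<lambda>k Ek. stp n X M (D - int k - 1) Ek)"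
  have E0: "E 0 = G D" and ES: "E (Suc k) = stp n X M (D - int k - 1) (E k)" for k
    unfolding E_def by simp_all
  define F where "F i = (if i \<ge> D then G i else E (nat (D - i)))" for i
  have nn: "nat (1 + int m) = Suc m" for m by simp
  have FE: "F (D - int k) = E k" for k
    by (cases k) (auto simp: F_def E0 nn)
  have Q: "F (D - int k) \<in> carrier_mat (dims M (D - int k)) (dims X (D - int k)) \<and>
      F (D - int k + 1) \<in> carrier_mat (dims M (D - int k + 1)) (dims X (D - int k + 1)) \<and>
      (\<forall>j\<le>n. F (D - int k + 1) * acts X j (D - int k) = acts M j (D - int k) * F (D - int k))" for k
  proof (induction k)
    case 0
    then show ?case using G1[of D] G1[of "D+1"] G2[of D] by (simp add: F_def)
  next
    case (Suc k)
    let ?i = "D - int k - 1"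
    have i1: "?i + 1 = D - int k" and i2: "?i + 2 = D - int k + 1" by simp_all
    have Gn: "F (D - int k) \<in> carrier_mat (dims M (?i+1)) (dims X (?i+1))" unfolding i1 using Suc by blast
    have Gnn: "F (D - int k + 1) \<in> carrier_mat (dims M (?i+2)) (dims X (?i+2))" unfolding i2 using Suc by blast
    have comm: "\<forall>j\<le>n. F (D - int k + 1) * acts X j (?i+1) = acts M j (?i+1) * F (D - int k)"
      unfolding i1 using Suc by blast
    have dd: "D - int (Suc k) = ?i" "D - int (Suc k) + 1 = D - int k" by simp_all
    have eq: "F ?i = stp n X M ?i (F (D - int k))"
      using FE[of "Suc k"] FE[of k] ES[of k] unfolding dd by simp
    note R = stp_ok[OF wfX aM sv Gn Gnn comm]
    show ?case unfolding dd eq unfolding i1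
      using R Suc by blast
  qed
  have "gmap n X M F"
    unfolding gmap_def
  proof (intro conjI allI impI)
    fix i
    show "F i \<in> carrier_mat (dims M i) (dims X i)"
    proof (cases "i \<ge> D")
      case True then show ?thesis using G1 by (simp add: F_def)
    next
      case False
      then show ?thesis using Q[of "nat (D - i)"] by simp
    qed
  next
    fix j i assume j: "j \<le> n"
    show "F (i + 1) * acts X j i = acts M j i * F i"
    proof (cases "i \<ge> D")
      case True then show ?thesis using G2[OF True j] by (simp add: F_def)
    next
      case False
      then show ?thesis using Q[of "nat (D - i)"] j by simp
    qed
  qed
  then show ?thesis by (intro exI[of _ F]) (simp add: F_def)
qed


lemma gmap_comp:
  assumes F: "gmap n X Y F" and G: "gmap n Y Z G" and aX: "acar n X" and aY: "acar n Y" and aZ: "acar n Z"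
  shows "gmap n X Z (\<lambda>i. G i * F i)"
  unfolding gmap_def
proof (intro conjI allI impI)
  fix i show "G i * F i \<in> carrier_mat (dims Z i) (dims X i)" using gmapD1[OF F, of i] gmapD1[OF G, of i] by (rule mult_carrier_mat[rotated])
next
  fix j i assume j: "j \<le> n"
  have c: "F i \<in> carrier_mat (dims Y i) (dims X i)" "G i \<in> carrier_mat (dims Z i) (dims Y i)"
    "F (i+1) \<in> carrier_mat (dims Y (i+1)) (dims X (i+1))" "G (i+1) \<in> carrier_mat (dims Z (i+1)) (dims Y (i+1))"
    using gmapD1[OF F] gmapD1[OF G] by auto
  have a: "acts X j i \<in> carrier_mat (dims X (i+1)) (dims X i)" "acts Y j i \<in> carrier_mat (dims Y (i+1)) (dims Y i)"
    "acts Z j i \<in> carrier_mat (dims Z (i+1)) (dims Z i)" using acarD[OF aX j] acarD[OF aY j] acarD[OF aZ j] by auto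
  have "G (i+1) * F (i+1) * acts X j i = G (i+1) * (F (i+1) * acts X j i)" using c a by simp
  also have "\<dots> = G (i+1) * (acts Y j i * F i)" using gmapD2[OF F j] by simp
  also have "\<dots> = (G (i+1) * acts Y j i) * F i" using c a by simp
  also have "\<dots> = (acts Z j i * G i) * F i" using gmapD2[OF G j] by simp
  also have "\<dots> = acts Z j i * (G i * F i)" using c a by simp
  finally show "G (i+1) * F (i+1) * acts X j i = acts Z j i * (G i * F i)" .
qed

lemma gmap_add:
  assumes F: "gmap n X Y F" and G: "gmap n X Y G" and aX: "acar n X" and aY: "acar n Y"
  shows "gmap n X Y (\<lambda>i. F i + G i)"
  unfolding gmap_def
proof (intro conjI allI impI)
  fix i show "F i + G i \<in> carrier_mat (dims Y i) (dims X i)" using gmapD1[OF F] gmapD1[OF G] by simp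
next
  fix j i assume j: "j \<le> n"
  have c: "F i \<in> carrier_mat (dims Y i) (dims X i)" "G i \<in> carrier_mat (dims Y i) (dims X i)"
    "F (i+1) \<in> carrier_mat (dims Y (i+1)) (dims X (i+1))" "G (i+1) \<in> carrier_mat (dims Y (i+1)) (dims X (i+1))"
    using gmapD1[OF F] gmapD1[OF G] by auto
  have a: "acts X j i \<in> carrier_mat (dims X (i+1)) (dims X i)" "acts Y j i \<in> carrier_mat (dims Y (i+1)) (dims Y i)"
    using acarD[OF aX j] acarD[OF aY j] by auto
  have "(F (i+1) + G (i+1)) * acts X j i = F (i+1) * acts X j i + G (i+1) * acts X j i"
    using c a by (simp add: add_mult_distrib_mat)
  also have "\<dots> = acts Y j i * F i + acts Y j i * G i" using gmapD2[OF F j] gmapD2[OF G j] by simp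
  also have "\<dots> = acts Y j i * (F i + G i)" using c a by (simp add: mult_add_distrib_mat)
  finally show "(F (i+1) + G (i+1)) * acts X j i = acts Y j i * (F i + G i)" .
qed

lemma gmap_uminus:
  assumes F: "gmap n X Y F" and aX: "acar n X" and aY: "acar n Y"
  shows "gmap n X Y (\<lambda>i. - F i)"
  unfolding gmap_def
proof (intro conjI allI impI)
  fix i show "- F i \<in> carrier_mat (dims Y i) (dims X i)" using gmapD1[OF F] by simp
next
  fix j i assume j: "j \<le> n"
  have c: "F i \<in> carrier_mat (dims Y i) (dims X i)"
    "F (i+1) \<in> carrier_mat (dims Y (i+1)) (dims X (i+1))"
    using gmapD1[OF F] by auto
  have a: "acts X j i \<in> carrier_mat (dims X (i+1)) (dims X i)" "acts Y j i \<in> carrier_mat (dims Y (i+1)) (dims Y i)"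
    using acarD[OF aX j] acarD[OF aY j] by auto
  have "(- F (i+1)) * acts X j i = - (F (i+1) * acts X j i)" using c a by simp
  also have "\<dots> = - (acts Y j i * F i)" using gmapD2[OF F j] by simp
  also have "\<dots> = acts Y j i * (- F i)" using c a by simp
  finally show "(- F (i+1)) * acts X j i = acts Y j i * (- F i)" .
qed

lemma gmap_minus:
  assumes F: "gmap n X Y F" and G: "gmap n X Y G" and aX: "acar n X" and aY: "acar n Y"
  shows "gmap n X Y (\<lambda>i. F i - G i)"
proof -
  have "gmap n X Y (\<lambda>i. F i + (- G i))" by (rule gmap_add[OF F gmap_uminus[OF G aX aY] aX aY])
  moreover have "F i + (- G i) = F i - G i" for i
    using gmapD1[OF F, of i] gmapD1[OF G, of i] by (simp add: add_uminus_minus_mat)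
  ultimately show ?thesis by simp
qed

lemma gmap_zero:
  assumes aX: "acar n X" and aY: "acar n Y"
  shows "gmap n X Y (\<lambda>i. 0\<^sub>m (dims Y i) (dims X i))"
  unfolding gmap_def
proof (intro conjI allI impI)
  fix j i assume j: "j \<le> n"
  show "0\<^sub>m (dims Y (i + 1)) (dims X (i + 1)) * acts X j i = acts Y j i * 0\<^sub>m (dims Y i) (dims X i)"
    using acarD[OF aX j, of i] acarD[OF aY j, of i] by simp
qed simp


definition cok :: "nat \<Rightarrow> 'k::field cplx \<Rightarrow> bool" where
  "cok n C \<longleftrightarrow> (\<forall>p. acar n (cmod C p)) \<and>
     (\<forall>p i. cdiff C p i \<in> carrier_mat (dims (cmod C (p+1)) i) (dims (cmod C p) i))"

lemma cokA: "cok n C \<Longrightarrow> acar n (cmod C p)" unfolding cok_def by auto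
lemma cokD: "cok n C \<Longrightarrow> cdiff C p i \<in> carrier_mat (dims (cmod C (p+1)) i) (dims (cmod C p) i)"
  unfolding cok_def by auto
lemma cokD': "cok n C \<Longrightarrow> cdiff C (p-1) i \<in> carrier_mat (dims (cmod C p) i) (dims (cmod C (p-1)) i)"
  using cokD[of n C "p-1" i] by simp

lemma wf_cok: "cplx_wf n C \<Longrightarrow> cok n C"
  unfolding cok_def cplx_wf_def using wf_acar gmapD1 by blast

lemma sig_dims: "dims (cmod (sigma K) p) i = (if - p \<le> i then dims (cmod K p) i else 0)"
  by (simp add: sigma_def)
lemma sig_acts: "acts (cmod (sigma K) p) j i = (if - p \<le> i then acts (cmod K p) j i
                       else 0\<^sub>m (if - p \<le> i + 1 then dims (cmod K p) (i+1) else 0) 0)"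
  by (simp add: sigma_def)
lemma sig_cdiff: "cdiff (sigma K) p i = (if - p \<le> i then cdiff K p i
                    else 0\<^sub>m (if - (p+1) \<le> i then dims (cmod K (p+1)) i else 0) 0)"
  by (simp add: sigma_def)

lemma sigma_cok: assumes "cok n K" shows "cok n (sigma K)"
  unfolding cok_def acar_def
proof (intro conjI allI impI)
  fix p j i assume j: "j \<le> n"
  show "acts (cmod (sigma K) p) j i \<in> carrier_mat (dims (cmod (sigma K) p) (i + 1)) (dims (cmod (sigma K) p) i)"
    using acarD[OF cokA[OF assms] j, of p i] by (auto simp: sig_dims sig_acts)
next
  fix p i
  show "cdiff (sigma K) p i \<in> carrier_mat (dims (cmod (sigma K) (p + 1)) i) (dims (cmod (sigma K) p) i)"
    using cokD[OF assms, of p i] by (auto simp: sig_dims sig_cdiff)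
qed

lemma incl_HomC: assumes "cok n K" shows "incl K \<in> HomC n (sigma K) K"
  unfolding HomC_def gmap_def
proof (intro CollectI conjI allI impI)
  fix p i
  show "incl K p i \<in> carrier_mat (dims (cmod K p) i) (dims (cmod (sigma K) p) i)"
    by (simp add: incl_def sig_dims)
next
  fix p j i assume j: "j \<le> n"
  have A: "acts (cmod K p) j i \<in> carrier_mat (dims (cmod K p) (i+1)) (dims (cmod K p) i)"
    using acarD[OF cokA[OF assms] j] .
  show "incl K p (i + 1) * acts (cmod (sigma K) p) j i = acts (cmod K p) j i * incl K p i"
    using A by (auto simp: incl_def sig_acts)
next
  fix p i
  have A: "cdiff K p i \<in> carrier_mat (dims (cmod K (p+1)) i) (dims (cmod K p) i)"
    using cokD[OF assms] .
  show "incl K (p + 1) i * cdiff (sigma K) p i = cdiff K p i * incl K p i"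
    using A by (auto simp: incl_def sig_cdiff)
qed

lemma HomC_gmap: "f \<in> HomC n K L \<Longrightarrow> gmap n (cmod K p) (cmod L p) (f p)"
  unfolding HomC_def by auto
lemma HomC_chain: "f \<in> HomC n K L \<Longrightarrow> f (p+1) i * cdiff K p i = cdiff L p i * f p i"
  unfolding HomC_def by auto

lemma HomC_comp:
  assumes f: "f \<in> HomC n K L" and g: "g \<in> HomC n L M" and K: "cok n K" and L: "cok n L" and M: "cok n M"
  shows "cm_comp g f \<in> HomC n K M"
  unfolding HomC_def cm_comp_def
proof (intro CollectI conjI allI)
  fix p show "gmap n (cmod K p) (cmod M p) (\<lambda>i. g p i * f p i)"
    by (rule gmap_comp[OF HomC_gmap[OF f] HomC_gmap[OF g] cokA[OF K] cokA[OF L] cokA[OF M]])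
next
  fix p i
  have c: "f p i \<in> carrier_mat (dims (cmod L p) i) (dims (cmod K p) i)"
    "f (p+1) i \<in> carrier_mat (dims (cmod L (p+1)) i) (dims (cmod K (p+1)) i)"
    "g p i \<in> carrier_mat (dims (cmod M p) i) (dims (cmod L p) i)"
    "g (p+1) i \<in> carrier_mat (dims (cmod M (p+1)) i) (dims (cmod L (p+1)) i)"
    using gmapD1[OF HomC_gmap[OF f]] gmapD1[OF HomC_gmap[OF g]] by auto
  have d: "cdiff K p i \<in> carrier_mat (dims (cmod K (p+1)) i) (dims (cmod K p) i)"
    "cdiff L p i \<in> carrier_mat (dims (cmod L (p+1)) i) (dims (cmod L p) i)"
    "cdiff M p i \<in> carrier_mat (dims (cmod M (p+1)) i) (dims (cmod M p) i)"
    using cokD[OF K] cokD[OF L] cokD[OF M] by auto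
  have "g (p+1) i * f (p+1) i * cdiff K p i = g (p+1) i * (f (p+1) i * cdiff K p i)" using c d by simp
  also have "\<dots> = g (p+1) i * (cdiff L p i * f p i)" using HomC_chain[OF f] by simp
  also have "\<dots> = (g (p+1) i * cdiff L p i) * f p i" using c d by simp
  also have "\<dots> = (cdiff M p i * g p i) * f p i" using HomC_chain[OF g] by simp
  also have "\<dots> = cdiff M p i * (g p i * f p i)" using c d by simp
  finally show "g (p+1) i * f (p+1) i * cdiff K p i = cdiff M p i * (g p i * f p i)" .
qed


lemma mat_sym_aux:
  fixes A :: "'a::ab_group_add mat"
  assumes c: "A \<in> carrier_mat r c" "B \<in> carrier_mat r c" "P \<in> carrier_mat r c" "Q \<in> carrier_mat r c"
    and e: "A - B = P + Q"
  shows "B - A = (- P) + (- Q)"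
proof (rule eq_matI)
  fix i j assume "i < dim_row (- P + - Q)" "j < dim_col (- P + - Q)"
  then have ij: "i < r" "j < c" using c by auto
  have "(A - B) $$ (i,j) = (P + Q) $$ (i,j)" using e by simp
  then have "A $$ (i,j) - B $$ (i,j) = P $$ (i,j) + Q $$ (i,j)" using c ij by simp
  then show "(B - A) $$ (i, j) = (- P + - Q) $$ (i, j)" using c ij by (simp add: algebra_simps)
qed (use c in auto)

lemma mat_trans_aux:
  fixes A :: "'a::ab_group_add mat"
  assumes c: "A \<in> carrier_mat r c" "B \<in> carrier_mat r c" "C \<in> carrier_mat r c"
    "P1 \<in> carrier_mat r c" "Q1 \<in> carrier_mat r c" "P2 \<in> carrier_mat r c" "Q2 \<in> carrier_mat r c"
    and e1: "A - B = P1 + Q1" and e2: "B - C = P2 + Q2"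
  shows "A - C = (P1 + P2) + (Q1 + Q2)"
proof (rule eq_matI)
  fix i j assume "i < dim_row (P1 + P2 + (Q1 + Q2))" "j < dim_col (P1 + P2 + (Q1 + Q2))"
  then have ij: "i < r" "j < c" using c by auto
  have "(A - B) $$ (i,j) = (P1 + Q1) $$ (i,j)" using e1 by simp
  then have 1: "A $$ (i,j) - B $$ (i,j) = P1 $$ (i,j) + Q1 $$ (i,j)" using c ij by simp
  have "(B - C) $$ (i,j) = (P2 + Q2) $$ (i,j)" using e2 by simp
  then have 2: "B $$ (i,j) - C $$ (i,j) = P2 $$ (i,j) + Q2 $$ (i,j)" using c ij by simp
  show "(A - C) $$ (i, j) = (P1 + P2 + (Q1 + Q2)) $$ (i, j)" using c ij 1 2
    by (simp add: algebra_simps)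
qed (use c in auto)


lemma htpI:
  assumes "f \<in> HomC n K L" "g \<in> HomC n K L" "\<forall>p. gmap n (cmod K p) (cmod L (p-1)) (h p)"
    "\<forall>p i. f p i - g p i = cdiff L (p-1) i * h p i + h (p+1) i * cdiff K p i"
  shows "(f, g) \<in> htp n K L"
  unfolding htp_def mem_Collect_eq case_prod_conv
proof (intro conjI exI[of _ h])
qed (fact assms)+

lemma htpE:
  assumes "(f, g) \<in> htp n K L"
  obtains h where "f \<in> HomC n K L" "g \<in> HomC n K L" "\<forall>p. gmap n (cmod K p) (cmod L (p-1)) (h p)"
    "\<forall>p i. f p i - g p i = cdiff L (p-1) i * h p i + h (p+1) i * cdiff K p i"
  using assms unfolding htp_def by (simp only: mem_Collect_eq case_prod_conv) blast

lemma htp_sub: "htp n K L \<subseteq> HomC n K L \<times> HomC n K L"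
  by (auto elim: htpE)

lemma htp_equiv:
  fixes C I :: "'k::field cplx"
  assumes C: "cok n C" and I: "cok n I"
  shows "equiv (HomC n C I) (htp n C I)"
proof (rule equivI)
  show "htp n C I \<subseteq> HomC n C I \<times> HomC n C I" by (rule htp_sub)
next
  show "refl_on (HomC n C I) (htp n C I)"
  proof (rule refl_onI)
    fix f assume f: "f \<in> HomC n C I"
    define h where "h p i = (0\<^sub>m (dims (cmod I (p-1)) i) (dims (cmod C p) i) :: 'k mat)" for p i
    have hg: "\<forall>p. gmap n (cmod C p) (cmod I (p-1)) (h p)"
      unfolding h_def using gmap_zero[OF cokA[OF C] cokA[OF I]] by blast
    have "f p i - f p i = cdiff I (p-1) i * h p i + h (p+1) i * cdiff C p i" for p i
    proof -
      have fc: "f p i \<in> carrier_mat (dims (cmod I p) i) (dims (cmod C p) i)"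
        using gmapD1[OF HomC_gmap[OF f]] .
      have d1: "cdiff I (p-1) i \<in> carrier_mat (dims (cmod I p) i) (dims (cmod I (p-1)) i)" using cokD'[OF I] .
      have d2: "cdiff C p i \<in> carrier_mat (dims (cmod C (p+1)) i) (dims (cmod C p) i)" using cokD[OF C] .
      show ?thesis using fc d1 d2 unfolding h_def by simp
    qed
    then show "(f, f) \<in> htp n C I" using f hg by (intro htpI) auto
  qed
next
  show "sym (htp n C I)"
  proof (rule symI)
    fix f g assume "(f, g) \<in> htp n C I"
    then obtain h where f: "f \<in> HomC n C I" and g: "g \<in> HomC n C I"
      and hg: "\<forall>p. gmap n (cmod C p) (cmod I (p-1)) (h p)"
      and he: "\<forall>p i. f p i - g p i = cdiff I (p-1) i * h p i + h (p+1) i * cdiff C p i"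
      by (elim htpE)
    define h' where "h' p i = - h p i" for p i
    have hg': "\<forall>p. gmap n (cmod C p) (cmod I (p-1)) (h' p)"
      unfolding h'_def using gmap_uminus[OF _ cokA[OF C] cokA[OF I]] hg by blast
    have "g p i - f p i = cdiff I (p-1) i * h' p i + h' (p+1) i * cdiff C p i" for p i
    proof -
      have fc: "f p i \<in> carrier_mat (dims (cmod I p) i) (dims (cmod C p) i)"
        using gmapD1[OF HomC_gmap[OF f]] .
      have gc: "g p i \<in> carrier_mat (dims (cmod I p) i) (dims (cmod C p) i)"
        using gmapD1[OF HomC_gmap[OF g]] .
      have d1: "cdiff I (p-1) i \<in> carrier_mat (dims (cmod I p) i) (dims (cmod I (p-1)) i)" using cokD'[OF I] .
      have d2: "cdiff C p i \<in> carrier_mat (dims (cmod C (p+1)) i) (dims (cmod C p) i)" using cokD[OF C] .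
      have h1: "h p i \<in> carrier_mat (dims (cmod I (p-1)) i) (dims (cmod C p) i)" using gmapD1 hg by blast
      have h2: "h (p+1) i \<in> carrier_mat (dims (cmod I p) i) (dims (cmod C (p+1)) i)" using gmapD1[OF hg[rule_format, of "p+1"], of i] by simp
      have "g p i - f p i = - (cdiff I (p-1) i * h p i) + - (h (p+1) i * cdiff C p i)"
        by (rule mat_sym_aux[OF fc gc _ _ he[rule_format]]) (use d1 d2 h1 h2 in auto)
      also have "- (cdiff I (p-1) i * h p i) = cdiff I (p-1) i * h' p i"
        unfolding h'_def using d1 h1 by simp
      also have "- (h (p+1) i * cdiff C p i) = h' (p+1) i * cdiff C p i"
        unfolding h'_def using d2 h2 by simp
      finally show ?thesis .
    qed
    then show "(g, f) \<in> htp n C I" using f g hg' by (intro htpI) auto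
  qed
next
  show "trans (htp n C I)"
  proof (rule transI)
    fix f g k assume "(f, g) \<in> htp n C I" "(g, k) \<in> htp n C I"
    then obtain h1 h2 where f: "f \<in> HomC n C I" and g: "g \<in> HomC n C I" and k: "k \<in> HomC n C I"
      and hg1: "\<forall>p. gmap n (cmod C p) (cmod I (p-1)) (h1 p)"
      and he1: "\<forall>p i. f p i - g p i = cdiff I (p-1) i * h1 p i + h1 (p+1) i * cdiff C p i"
      and hg2: "\<forall>p. gmap n (cmod C p) (cmod I (p-1)) (h2 p)"
      and he2: "\<forall>p i. g p i - k p i = cdiff I (p-1) i * h2 p i + h2 (p+1) i * cdiff C p i"
      by (elim htpE) metis
    define h where "h p i = h1 p i + h2 p i" for p i
    have hg: "\<forall>p. gmap n (cmod C p) (cmod I (p-1)) (h p)"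
      unfolding h_def using gmap_add[OF _ _ cokA[OF C] cokA[OF I]] hg1 hg2 by blast
    have "f p i - k p i = cdiff I (p-1) i * h p i + h (p+1) i * cdiff C p i" for p i
    proof -
      have fc: "f p i \<in> carrier_mat (dims (cmod I p) i) (dims (cmod C p) i)"
        using gmapD1[OF HomC_gmap[OF f]] .
      have gc: "g p i \<in> carrier_mat (dims (cmod I p) i) (dims (cmod C p) i)"
        using gmapD1[OF HomC_gmap[OF g]] .
      have kc: "k p i \<in> carrier_mat (dims (cmod I p) i) (dims (cmod C p) i)"
        using gmapD1[OF HomC_gmap[OF k]] .
      have d1: "cdiff I (p-1) i \<in> carrier_mat (dims (cmod I p) i) (dims (cmod I (p-1)) i)" using cokD'[OF I] .
      have d2: "cdiff C p i \<in> carrier_mat (dims (cmod C (p+1)) i) (dims (cmod C p) i)" using cokD[OF C] .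
      have a1: "h1 p i \<in> carrier_mat (dims (cmod I (p-1)) i) (dims (cmod C p) i)" using gmapD1 hg1 by blast
      have a2: "h1 (p+1) i \<in> carrier_mat (dims (cmod I p) i) (dims (cmod C (p+1)) i)" using gmapD1[OF hg1[rule_format, of "p+1"], of i] by simp
      have b1: "h2 p i \<in> carrier_mat (dims (cmod I (p-1)) i) (dims (cmod C p) i)" using gmapD1 hg2 by blast
      have b2: "h2 (p+1) i \<in> carrier_mat (dims (cmod I p) i) (dims (cmod C (p+1)) i)" using gmapD1[OF hg2[rule_format, of "p+1"], of i] by simp
      have "f p i - k p i = (cdiff I (p-1) i * h1 p i + cdiff I (p-1) i * h2 p i) +
           (h1 (p+1) i * cdiff C p i + h2 (p+1) i * cdiff C p i)"
        by (rule mat_trans_aux[OF fc gc kc _ _ _ _ he1[rule_format] he2[rule_format]])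
          (use d1 d2 a1 a2 b1 b2 in auto)
      also have "cdiff I (p-1) i * h1 p i + cdiff I (p-1) i * h2 p i = cdiff I (p-1) i * h p i"
        unfolding h_def using d1 a1 b1 by (simp add: mult_add_distrib_mat)
      also have "h1 (p+1) i * cdiff C p i + h2 (p+1) i * cdiff C p i = h (p+1) i * cdiff C p i"
        unfolding h_def using d2 a2 b2 by (simp add: add_mult_distrib_mat)
      finally show ?thesis .
    qed
    then show "(f, k) \<in> htp n C I" using f k hg by (intro htpI) auto
  qed
qed


lemma soc_mono: "soc n M D \<Longrightarrow> D' \<le> D \<Longrightarrow> soc n M D'"
  unfolding soc_def by auto

lemma wf_mod: "cplx_wf n C \<Longrightarrow> gmod_wf n (cmod C p)"
  unfolding cplx_wf_def by auto
lemma wf_dgmap: "cplx_wf n C \<Longrightarrow> gmap n (cmod C p) (cmod C (p+1)) (cdiff C p)"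
  unfolding cplx_wf_def by auto

lemma Phi_val:
  assumes f: "f \<in> HomC n K I" and i: "- p \<le> i"
  shows "cm_comp f (incl K) p i = f p i"
proof -
  have "f p i \<in> carrier_mat (dims (cmod I p) i) (dims (cmod K p) i)"
    using gmapD1[OF HomC_gmap[OF f]] .
  then show ?thesis using i by (simp add: cm_comp_def incl_def)
qed

lemma Phi_low:
  assumes f: "f \<in> HomC n (sigma K) I" and i: "\<not> - p \<le> i"
  shows "f p i = 0\<^sub>m (dims (cmod I p) i) 0"
proof -
  have "f p i \<in> carrier_mat (dims (cmod I p) i) (dims (cmod (sigma K) p) i)"
    using gmapD1[OF HomC_gmap[OF f]] .
  then show ?thesis using i by (simp add: sig_dims mat_zero_cols)
qed

context
  fixes n :: nat and I K :: "'k::field cplx"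
  assumes wI: "cplx_wf n I" and wK: "cplx_wf n K"
    and sc: "\<And>p. soc n (cmod I p) (- p + 1)" and sv: "\<And>p. solv n (cmod I p)"
begin

lemma cI: "cok n I" using wf_cok[OF wI] .
lemma cK: "cok n K" using wf_cok[OF wK] .
lemma cS: "cok n (sigma K)" using sigma_cok[OF cK] .
lemma aI: "acar n (cmod I p)" using cokA[OF cI] .
lemma aK: "acar n (cmod K p)" using cokA[OF cK] .
lemma aS: "acar n (cmod (sigma K) p)" using cokA[OF cS] .
lemma sc0: "soc n (cmod I p) (- p)" using soc_mono[OF sc[of p]] by simp

lemma Phi_HomC: "f \<in> HomC n K I \<Longrightarrow> cm_comp f (incl K) \<in> HomC n (sigma K) I"
  by (rule HomC_comp[OF incl_HomC[OF cK] _ cS cK cI])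

lemma Phi_inj:
  assumes f: "f \<in> HomC n K I" and g: "g \<in> HomC n K I" and e: "cm_comp f (incl K) = cm_comp g (incl K)"
  shows "f = g"
proof (intro ext)
  fix p i
  show "f p i = g p i"
  proof (rule gmap_unique[OF sc0 aI aK HomC_gmap[OF f] HomC_gmap[OF g]])
    fix i assume i: "- p \<le> i"
    have "cm_comp f (incl K) p i = cm_comp g (incl K) p i" using e by simp
    then show "f p i = g p i" using Phi_val[OF f i] Phi_val[OF g i] by simp
  qed
qed

lemma Phi_surj:
  assumes g: "g \<in> HomC n (sigma K) I"
  shows "\<exists>f\<in>HomC n K I. cm_comp f (incl K) = g"
proof -
  have "\<exists>F. gmap n (cmod K p) (cmod I p) F \<and> (\<forall>i\<ge>- p. F i = g p i)" for p
  proof (rule gmap_ext[OF wf_mod[OF wK] aI sv])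
    fix i assume i: "- p \<le> i"
    show "g p i \<in> carrier_mat (dims (cmod I p) i) (dims (cmod K p) i)"
      using gmapD1[OF HomC_gmap[OF g], of p i] i by (simp add: sig_dims)
  next
    fix i j assume i: "- p \<le> i" and j: "j \<le> n"
    show "g p (i + 1) * acts (cmod K p) j i = acts (cmod I p) j i * g p i"
      using gmapD2[OF HomC_gmap[OF g] j, of p i] i by (simp add: sig_acts)
  qed
  then obtain F where F1: "\<And>p. gmap n (cmod K p) (cmod I p) (F p)"
    and F2: "\<And>p i. - p \<le> i \<Longrightarrow> F p i = g p i" by metis
  have chain: "F (p+1) i * cdiff K p i = cdiff I p i * F p i" for p i
  proof -
    have G1: "gmap n (cmod K p) (cmod I (p+1)) (\<lambda>i. F (p+1) i * cdiff K p i)"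
      by (rule gmap_comp[OF wf_dgmap[OF wK] F1 aK aK aI])
    have G2: "gmap n (cmod K p) (cmod I (p+1)) (\<lambda>i. cdiff I p i * F p i)"
      by (rule gmap_comp[OF F1 wf_dgmap[OF wI] aK aI aI])
    have s: "soc n (cmod I (p+1)) (- p)" using sc[of "p+1"] by simp
    show ?thesis
    proof (rule gmap_unique[OF s aI aK G1 G2])
      fix i assume i: "- p \<le> i"
      have "F (p+1) i * cdiff K p i = g (p+1) i * cdiff (sigma K) p i"
        using F2[of "p+1" i] i by (simp add: sig_cdiff)
      also have "\<dots> = cdiff I p i * g p i" using HomC_chain[OF g] .
      also have "\<dots> = cdiff I p i * F p i" using F2[OF i] by simp
      finally show "F (p+1) i * cdiff K p i = cdiff I p i * F p i" .
    qed
  qed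
  have FH: "F \<in> HomC n K I" unfolding HomC_def using F1 chain by blast
  have "cm_comp F (incl K) = g"
  proof (intro ext)
    fix p i
    show "cm_comp F (incl K) p i = g p i"
    proof (cases "- p \<le> i")
      case True then show ?thesis using Phi_val[OF FH True] F2[OF True] by simp
    next
      case False
      have "cm_comp F (incl K) p i = 0\<^sub>m (dims (cmod I p) i) 0"
        by (rule Phi_low[OF Phi_HomC[OF FH] False])
      also have "\<dots> = g p i" using Phi_low[OF g False] by simp
      finally show ?thesis .
    qed
  qed
  then show ?thesis using FH by blast
qed


lemma htp_Phi:
  assumes fg: "(f, g) \<in> htp n K I"
  shows "(cm_comp f (incl K), cm_comp g (incl K)) \<in> htp n (sigma K) I"
proof -
  obtain h where f: "f \<in> HomC n K I" and g: "g \<in> HomC n K I"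
    and hg: "\<forall>p. gmap n (cmod K p) (cmod I (p-1)) (h p)"
    and he: "\<forall>p i. f p i - g p i = cdiff I (p-1) i * h p i + h (p+1) i * cdiff K p i"
    using fg by (elim htpE)
  define h' where "h' p i = h p i * incl K p i" for p i
  have inc: "incl K \<in> HomC n (sigma K) K" by (rule incl_HomC[OF cK])
  have hg': "\<forall>p. gmap n (cmod (sigma K) p) (cmod I (p-1)) (h' p)"
    unfolding h'_def using gmap_comp[OF HomC_gmap[OF inc] _ aS aK aI] hg by blast
  have "cm_comp f (incl K) p i - cm_comp g (incl K) p i =
      cdiff I (p-1) i * h' p i + h' (p+1) i * cdiff (sigma K) p i" for p i
  proof -
    have fc: "f p i \<in> carrier_mat (dims (cmod I p) i) (dims (cmod K p) i)" using gmapD1[OF HomC_gmap[OF f]] .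
    have gc: "g p i \<in> carrier_mat (dims (cmod I p) i) (dims (cmod K p) i)" using gmapD1[OF HomC_gmap[OF g]] .
    have ic: "incl K p i \<in> carrier_mat (dims (cmod K p) i) (dims (cmod (sigma K) p) i)"
      using gmapD1[OF HomC_gmap[OF inc]] .
    have ic1: "incl K (p+1) i \<in> carrier_mat (dims (cmod K (p+1)) i) (dims (cmod (sigma K) (p+1)) i)"
      using gmapD1[OF HomC_gmap[OF inc]] .
    have d1: "cdiff I (p-1) i \<in> carrier_mat (dims (cmod I p) i) (dims (cmod I (p-1)) i)" using cokD'[OF cI] .
    have d2: "cdiff K p i \<in> carrier_mat (dims (cmod K (p+1)) i) (dims (cmod K p) i)" using cokD[OF cK] .
    have d3: "cdiff (sigma K) p i \<in> carrier_mat (dims (cmod (sigma K) (p+1)) i) (dims (cmod (sigma K) p) i)"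
      using cokD[OF cS] .
    have h1: "h p i \<in> carrier_mat (dims (cmod I (p-1)) i) (dims (cmod K p) i)" using gmapD1 hg by blast
    have h2: "h (p+1) i \<in> carrier_mat (dims (cmod I p) i) (dims (cmod K (p+1)) i)"
      using gmapD1[OF hg[rule_format, of "p+1"], of i] by simp
    have "cm_comp f (incl K) p i - cm_comp g (incl K) p i = (f p i - g p i) * incl K p i"
      unfolding cm_comp_def using fc gc ic by (simp add: minus_mult_distrib_mat)
    also have "\<dots> = (cdiff I (p-1) i * h p i + h (p+1) i * cdiff K p i) * incl K p i" using he by simp
    also have "\<dots> = cdiff I (p-1) i * h p i * incl K p i + h (p+1) i * cdiff K p i * incl K p i"
      using d1 h1 h2 d2 ic by (simp add: add_mult_distrib_mat[of _ "dims (cmod I p) i" "dims (cmod K p) i"])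
    also have "cdiff I (p-1) i * h p i * incl K p i = cdiff I (p-1) i * h' p i"
      unfolding h'_def using d1 h1 ic by simp
    also have "h (p+1) i * cdiff K p i * incl K p i = h (p+1) i * (cdiff K p i * incl K p i)"
      using h2 d2 ic by simp
    also have "cdiff K p i * incl K p i = incl K (p+1) i * cdiff (sigma K) p i"
      using HomC_chain[OF inc] by simp
    also have "h (p+1) i * (incl K (p+1) i * cdiff (sigma K) p i) = h' (p+1) i * cdiff (sigma K) p i"
      unfolding h'_def using h2 ic1 d3 by simp
    finally show ?thesis .
  qed
  then show ?thesis using Phi_HomC[OF f] Phi_HomC[OF g] hg' by (intro htpI) auto
qed

lemma htp_lift:
  assumes f: "f \<in> HomC n K I" and g: "g \<in> HomC n K I"
    and fg: "(cm_comp f (incl K), cm_comp g (incl K)) \<in> htp n (sigma K) I"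
  shows "(f, g) \<in> htp n K I"
proof -
  obtain h where hg: "\<forall>p. gmap n (cmod (sigma K) p) (cmod I (p-1)) (h p)"
    and he: "\<forall>p i. cm_comp f (incl K) p i - cm_comp g (incl K) p i =
        cdiff I (p-1) i * h p i + h (p+1) i * cdiff (sigma K) p i"
    using fg by (elim htpE)
  have "\<exists>H. gmap n (cmod K p) (cmod I (p-1)) H \<and> (\<forall>i\<ge>- p. H i = h p i)" for p
  proof (rule gmap_ext[OF wf_mod[OF wK] aI sv])
    fix i assume i: "- p \<le> i"
    show "h p i \<in> carrier_mat (dims (cmod I (p-1)) i) (dims (cmod K p) i)"
      using gmapD1[OF hg[rule_format, of p], of i] i by (simp add: sig_dims)
  next
    fix i j assume i: "- p \<le> i" and j: "j \<le> n"
    show "h p (i + 1) * acts (cmod K p) j i = acts (cmod I (p-1)) j i * h p i"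
      using gmapD2[OF hg[rule_format, of p] j, of i] i by (simp add: sig_acts)
  qed
  then obtain H where H1: "\<And>p. gmap n (cmod K p) (cmod I (p-1)) (H p)"
    and H2: "\<And>p i. - p \<le> i \<Longrightarrow> H p i = h p i" by metis
  have "f p i - g p i = cdiff I (p-1) i * H p i + H (p+1) i * cdiff K p i" for p i
  proof -
    have G1: "gmap n (cmod K p) (cmod I p) (\<lambda>i. f p i - g p i)"
      by (rule gmap_minus[OF HomC_gmap[OF f] HomC_gmap[OF g] aK aI])
    have dI: "gmap n (cmod I (p-1)) (cmod I p) (cdiff I (p-1))"
      using wf_dgmap[OF wI, of "p-1"] by simp
    have Hp1: "gmap n (cmod K (p+1)) (cmod I p) (H (p+1))"
      using H1[of "p+1"] by simp
    have G2: "gmap n (cmod K p) (cmod I p) (\<lambda>i. cdiff I (p-1) i * H p i + H (p+1) i * cdiff K p i)"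
      by (rule gmap_add[OF gmap_comp[OF H1 dI aK aI aI] gmap_comp[OF wf_dgmap[OF wK] Hp1 aK aK aI] aK aI])
    show ?thesis
    proof (rule gmap_unique[OF sc0 aI aK G1 G2])
      fix i assume i: "- p \<le> i"
      have "f p i - g p i = cm_comp f (incl K) p i - cm_comp g (incl K) p i"
        using Phi_val[OF f i] Phi_val[OF g i] by simp
      also have "\<dots> = cdiff I (p-1) i * h p i + h (p+1) i * cdiff (sigma K) p i" using he by simp
      also have "\<dots> = cdiff I (p-1) i * H p i + H (p+1) i * cdiff K p i"
        using H2[OF i] H2[of "p+1" i] i by (simp add: sig_cdiff)
      finally show "f p i - g p i = cdiff I (p-1) i * H p i + H (p+1) i * cdiff K p i" .
    qed
  qed
  then show ?thesis using f g H1 by (intro htpI) auto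
qed

lemma main_gen:
  shows "bij_betw (\<lambda>f. cm_comp f (incl K)) (HomC n K I) (HomC n (sigma K) I)
       \<and> bij_betw (\<lambda>c. \<Union>f\<in>c. htp n (sigma K) I `` {cm_comp f (incl K)})
                 (HomK n K I) (HomK n (sigma K) I)"
proof
  show "bij_betw (\<lambda>f. cm_comp f (incl K)) (HomC n K I) (HomC n (sigma K) I)"
    unfolding bij_betw_def
  proof
    show "inj_on (\<lambda>f. cm_comp f (incl K)) (HomC n K I)" using Phi_inj by (intro inj_onI) blast
    show "(\<lambda>f. cm_comp f (incl K)) ` HomC n K I = HomC n (sigma K) I"
      using Phi_HomC Phi_surj by blast
  qed
next
  let ?RK = "htp n K I" and ?RS = "htp n (sigma K) I"
  let ?P = "\<lambda>f. cm_comp f (incl K)"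
  let ?psi = "\<lambda>c. \<Union>f\<in>c. ?RS `` {?P f}"
  have eK: "equiv (HomC n K I) ?RK" by (rule htp_equiv[OF cK cI])
  have eS: "equiv (HomC n (sigma K) I) ?RS" by (rule htp_equiv[OF cS cI])
  have psi: "?psi (?RK `` {f}) = ?RS `` {?P f}" if f: "f \<in> HomC n K I" for f
  proof -
    have "?RS `` {?P f'} = ?RS `` {?P f}" if "f' \<in> ?RK `` {f}" for f'
    proof -
      have "(f, f') \<in> ?RK" using that by simp
      then have "(?P f, ?P f') \<in> ?RS" by (rule htp_Phi)
      then show ?thesis using eS by (metis equiv_class_eq_iff)
    qed
    moreover have "f \<in> ?RK `` {f}" by (rule equiv_class_self[OF eK f])
    ultimately show ?thesis by blast
  qed
  show "bij_betw ?psi (HomK n K I) (HomK n (sigma K) I)"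
    unfolding bij_betw_def HomK_def
  proof
    show "inj_on ?psi (HomC n K I // ?RK)"
    proof (rule inj_onI)
      fix c d assume c: "c \<in> HomC n K I // ?RK" and d: "d \<in> HomC n K I // ?RK" and e: "?psi c = ?psi d"
      obtain f where f: "f \<in> HomC n K I" and cf: "c = ?RK `` {f}" using c by (auto elim: quotientE)
      obtain g where g: "g \<in> HomC n K I" and dg: "d = ?RK `` {g}" using d by (auto elim: quotientE)
      have "?RS `` {?P f} = ?RS `` {?P g}" using e psi[OF f] psi[OF g] cf dg by simp
      then have "(?P f, ?P g) \<in> ?RS" using eS Phi_HomC[OF f] Phi_HomC[OF g] by (metis eq_equiv_class_iff)
      then have "(f, g) \<in> ?RK" by (rule htp_lift[OF f g])
      then show "c = d" unfolding cf dg using eK by (metis equiv_class_eq_iff)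
    qed
    show "?psi ` (HomC n K I // ?RK) = HomC n (sigma K) I // ?RS"
    proof
      show "?psi ` (HomC n K I // ?RK) \<subseteq> HomC n (sigma K) I // ?RS"
      proof
        fix x assume "x \<in> ?psi ` (HomC n K I // ?RK)"
        then obtain c where c: "c \<in> HomC n K I // ?RK" and x: "x = ?psi c" by blast
        obtain f where f: "f \<in> HomC n K I" and cf: "c = ?RK `` {f}" using c by (auto elim: quotientE)
        have "x = ?RS `` {?P f}" using x cf psi[OF f] by simp
        then show "x \<in> HomC n (sigma K) I // ?RS" using Phi_HomC[OF f] by (auto intro: quotientI)
      qed
    next
      show "HomC n (sigma K) I // ?RS \<subseteq> ?psi ` (HomC n K I // ?RK)"
      proof
        fix x assume "x \<in> HomC n (sigma K) I // ?RS"
        then obtain g where g: "g \<in> HomC n (sigma K) I" and xg: "x = ?RS `` {g}" by (auto elim: quotientE)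
        obtain f where f: "f \<in> HomC n K I" and fg: "?P f = g" using Phi_surj[OF g] by blast
        have "x = ?psi (?RK `` {f})" using psi[OF f] xg fg by simp
        moreover have "?RK `` {f} \<in> HomC n K I // ?RK" using f by (auto intro: quotientI)
        ultimately show "x \<in> ?psi ` (HomC n K I // ?RK)" by blast
      qed
    qed
  qed
qed

end

lemma subs_neg: "m < 0 \<Longrightarrow> subs n m = []"
  by (simp add: subs_def)

lemma subs_mem:
  assumes "xs \<in> set (subs n m)"
  shows "0 \<le> m" "set xs \<subseteq> {..n}" "card (set xs) = nat m" "distinct xs"
proof -
  show m: "0 \<le> m" using assms by (cases "m < 0") (auto simp: subs_def)
  have xs: "xs \<in> set (subseqs [0..<Suc n])" and l: "length xs = nat m"
    using assms m by (auto simp: subs_def)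
  have "set xs \<in> set ` set (subseqs [0..<Suc n])" using xs by blast
  then show "set xs \<subseteq> {..n}" unfolding subseqs_powset by auto
  show d: "distinct xs" using subseqs_distinctD[OF xs] by simp
  show "card (set xs) = nat m" using distinct_card[OF d] l by simp
qed

lemma subs_dist: "distinct (map set (subs n m))"
proof (cases "m < 0")
  case True then show ?thesis by (simp add: subs_neg)
next
  case False
  have "distinct (map set (subseqs [0..<Suc n]))" by (rule distinct_set_subseqs) simp
  then show ?thesis using False by (simp add: subs_def distinct_map_filter)
qed

lemma subs_ex:
  assumes "0 \<le> m" "S \<subseteq> {..n}" "card S = nat m"
  shows "\<exists>c < length (subs n m). set (subs n m ! c) = S"
proof -
  have "S \<subseteq> set [0..<Suc n]" using assms by auto
  then obtain xs where xs: "xs \<in> set (subseqs [0..<Suc n])" and s: "set xs = S"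
    using subset_subseqs by blast
  have d: "distinct xs" using subseqs_distinctD[OF xs] by simp
  have "length xs = nat m" using distinct_card[OF d] s assms by simp
  then have "xs \<in> set (subs n m)" using xs assms by (simp add: subs_def)
  then obtain c where "c < length (subs n m)" "subs n m ! c = xs" by (metis in_set_conv_nth)
  then show ?thesis using s by blast
qed

lemma subs_uniq:
  assumes "c < length (subs n m)" "c' < length (subs n m)" "set (subs n m ! c) = set (subs n m ! c')"
  shows "c = c'"
proof -
  have "map set (subs n m) ! c = map set (subs n m) ! c'" using assms by simp
  then show ?thesis using nth_eq_iff_index_eq[OF subs_dist] assms by simp
qed

definition ix :: "nat \<Rightarrow> int \<Rightarrow> nat set \<Rightarrow> nat" where
  "ix n m S = (THE c. c < length (subs n m) \<and> set (subs n m ! c) = S)"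

lemma ix:
  assumes "0 \<le> m" "S \<subseteq> {..n}" "card S = nat m"
  shows "ix n m S < length (subs n m)" "set (subs n m ! ix n m S) = S"
proof -
  obtain c where c: "c < length (subs n m)" "set (subs n m ! c) = S" using subs_ex[OF assms] by blast
  have "ix n m S = c" unfolding ix_def
    by (rule the_equality) (use c subs_uniq in auto)
  then show "ix n m S < length (subs n m)" "set (subs n m ! ix n m S) = S" using c by auto
qed

lemma ix_eq: "c < length (subs n m) \<Longrightarrow> ix n m (set (subs n m ! c)) = c"
  unfolding ix_def by (rule the_equality) (use subs_uniq in auto)

lemma subs_full: "length (subs n (int n + 1)) \<ge> 1"
proof -
  have "card {..n} = nat (int n + 1)" by simp
  then obtain c where "c < length (subs n (int n + 1))" using subs_ex[of "int n + 1" "{..n}" n] by auto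
  then show ?thesis by simp
qed


definition sg :: "nat \<Rightarrow> nat set \<Rightarrow> 'k::field" where
  "sg j S = (- 1) ^ card {s\<in>S. s < j}"

lemma sg_sq: "sg j S * sg j S = (1::'k::field)"
  unfolding sg_def by (simp add: power_mult_distrib[symmetric] flip: power_add mult_2)

lemma sg_nz: "sg j S \<noteq> (0::'k::field)"
  unfolding sg_def by simp

lemma lam_dims: "dims (lamdual n a) i = length (subs n (- a - i))"
  by (simp add: lamdual_def)

lemma lam_acar: "acar n (lamdual n a :: 'k::field gmod)"
  unfolding acar_def by (simp add: lamdual_def diff_diff_eq)

lemma sum_single:
  assumes "finite A" "c0 \<in> A" "\<And>c. c \<in> A \<Longrightarrow> c \<noteq> c0 \<Longrightarrow> f c = 0"
  shows "sum f A = f c0"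
proof -
  have "sum f A = f c0 + sum f (A - {c0})" using assms by (simp add: sum.remove)
  also have "sum f (A - {c0}) = 0" using assms by (intro sum.neutral) auto
  finally show ?thesis by simp
qed

lemma lam_act:
  fixes y :: "'k::field vec"
  assumes y: "y \<in> carrier_vec (length (subs n m))" and m: "m = - a - i"
    and r: "r < length (subs n (m - 1))"
  shows "(acts (lamdual n a) j i *\<^sub>v y) $ r =
    (if j \<le> n \<and> j \<notin> set (subs n (m - 1) ! r)
     then sg j (insert j (set (subs n (m - 1) ! r))) * y $ ix n m (insert j (set (subs n (m - 1) ! r))) else 0)"
proof -
  let ?L = "subs n m" and ?L1 = "subs n (m - 1)"
  let ?T = "set (?L1 ! r)"
  define A where "A = acts (lamdual n a :: 'k gmod) j i"
  have Aij: "A $$ (r, c) = (if j \<in> set (?L ! c) \<and> ?T = set (?L ! c) - {j} then sg j (set (?L ! c)) else 0)"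
    if c: "c < length ?L" for c
    using r c m unfolding A_def by (simp add: lamdual_def sg_def Let_def diff_diff_eq)
  have dA: "dim_row A = length ?L1" "dim_col A = length ?L" unfolding A_def using m by (simp_all add: lamdual_def diff_diff_eq)
  have "(A *\<^sub>v y) $ r = row A r \<bullet> y" using dA r by simp
  also have "\<dots> = (\<Sum>c\<in>{0..<length ?L}. A $$ (r, c) * y $ c)"
    unfolding scalar_prod_def using y dA r by simp
  also have "\<dots> = (\<Sum>c\<in>{0..<length ?L}. (if j \<in> set (?L ! c) \<and> ?T = set (?L ! c) - {j} then sg j (set (?L ! c)) else 0) * y $ c)"
    by (intro sum.cong refl) (simp add: Aij)
  also have "\<dots> = (if j \<le> n \<and> j \<notin> ?T then sg j (insert j ?T) * y $ ix n m (insert j ?T) else 0)"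
  proof (cases "j \<le> n \<and> j \<notin> ?T")
    case True
    have T: "?T \<subseteq> {..n}" "card ?T = nat (m - 1)" "0 \<le> m - 1"
      using subs_mem[of "?L1 ! r" n "m - 1"] r by auto
    have fin: "finite ?T" using T(1) finite_subset by blast
    have ins: "insert j ?T \<subseteq> {..n}" "card (insert j ?T) = nat m" "0 \<le> m"
      using T True fin by auto
    note c0 = ix[OF ins(3) ins(1) ins(2)]
    have "(\<Sum>c\<in>{0..<length ?L}. (if j \<in> set (?L ! c) \<and> ?T = set (?L ! c) - {j} then sg j (set (?L ! c)) else 0) * y $ c)
       = (if j \<in> set (?L ! ix n m (insert j ?T)) \<and> ?T = set (?L ! ix n m (insert j ?T)) - {j}
          then sg j (set (?L ! ix n m (insert j ?T))) else 0) * y $ ix n m (insert j ?T)"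
    proof (rule sum_single)
      show "ix n m (insert j ?T) \<in> {0..<length ?L}" using c0 by simp
    next
      fix c assume c: "c \<in> {0..<length ?L}" and ne: "c \<noteq> ix n m (insert j ?T)"
      have "\<not> (j \<in> set (?L ! c) \<and> ?T = set (?L ! c) - {j})"
      proof
        assume h: "j \<in> set (?L ! c) \<and> ?T = set (?L ! c) - {j}"
        then have "set (?L ! c) = insert j ?T" by auto
        then have "set (?L ! c) = set (?L ! ix n m (insert j ?T))" using c0 by simp
        then have "c = ix n m (insert j ?T)" using subs_uniq c c0 by auto
        then show False using ne by simp
      qed
      then show "(if j \<in> set (?L ! c) \<and> ?T = set (?L ! c) - {j} then sg j (set (?L ! c)) else 0) * y $ c = 0"
        by (subst if_not_P) simp_all
    qed simp
    also have "\<dots> = sg j (insert j ?T) * y $ ix n m (insert j ?T)" using c0 True by auto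
    finally show ?thesis using True by simp
  next
    case False
    have "(\<Sum>c\<in>{0..<length ?L}. (if j \<in> set (?L ! c) \<and> ?T = set (?L ! c) - {j} then sg j (set (?L ! c)) else 0) * y $ c) = 0"
    proof (rule sum.neutral, rule ballI)
      fix c assume c: "c \<in> {0..<length ?L}"
      have "set (?L ! c) \<subseteq> {..n}" using subs_mem(2)[of "?L ! c" n m] c by simp
      then have "\<not> (j \<in> set (?L ! c) \<and> ?T = set (?L ! c) - {j})" using False by auto
      then show "(if j \<in> set (?L ! c) \<and> ?T = set (?L ! c) - {j} then sg j (set (?L ! c)) else 0) * y $ c = 0"
        by (subst if_not_P) simp_all
    qed
    moreover have "(if j \<le> n \<and> j \<notin> ?T then sg j (insert j ?T) * y $ ix n m (insert j ?T) else 0) = 0"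
      using False by (rule if_not_P)
    ultimately show ?thesis by simp
  qed
  finally show ?thesis unfolding A_def .
qed


lemma sg_remove_less:
  assumes "finite S" "j0 \<in> S" "j0 < j"
  shows "sg j (S - {j0}) = - (sg j S :: 'k::field)"
proof -
  have e: "{s \<in> S - {j0}. s < j} = {s \<in> S. s < j} - {j0}" by auto
  have f: "finite {s \<in> S. s < j}" using assms by simp
  have m: "j0 \<in> {s \<in> S. s < j}" using assms by simp
  have c: "card {s \<in> S. s < j} = Suc (card ({s \<in> S. s < j} - {j0}))"
    using card.remove[OF f m] .
  show ?thesis unfolding sg_def e c by simp
qed

lemma sg_remove_greater:
  assumes "j0 < j"
  shows "sg j0 (S - {j}) = (sg j0 S :: 'k::field)"
proof -
  have "{s \<in> S - {j}. s < j0} = {s \<in> S. s < j0}" using assms by auto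
  then show ?thesis unfolding sg_def by simp
qed

lemma lam_soc:
  assumes D: "D \<le> - a"
  shows "soc n (lamdual n a :: 'k::field gmod) D"
  unfolding soc_def
proof (intro allI impI ballI)
  fix i and y :: "'k vec" assume i: "i < D" and y: "y \<in> carrier_vec (dims (lamdual n a :: 'k gmod) i)"
    and z: "\<forall>j\<le>n. acts (lamdual n a) j i *\<^sub>v y = 0\<^sub>v (dims (lamdual n a :: 'k gmod) (i + 1))"
  define m where "m = - a - i"
  have y': "y \<in> carrier_vec (length (subs n m))" using y by (simp add: lam_dims m_def)
  show "y = 0\<^sub>v (dims (lamdual n a :: 'k gmod) i)"
  proof (rule eq_vecI)
    fix c assume "c < dim_vec (0\<^sub>v (dims (lamdual n a :: 'k gmod) i))"
    then have c: "c < length (subs n m)" by (simp add: lam_dims m_def)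
    let ?S = "set (subs n m ! c)"
    have S: "?S \<subseteq> {..n}" "card ?S = nat m" "0 \<le> m" using subs_mem[of "subs n m ! c" n m] c by auto
    have m1: "1 \<le> m" using i D m_def by simp
    then have "?S \<noteq> {}" using S by auto
    then obtain j where j: "j \<in> ?S" by (meson ex_in_conv)
    have fin: "finite ?S" using S(1) finite_subset by blast
    let ?T = "?S - {j}"
    have T: "?T \<subseteq> {..n}" "card ?T = nat (m - 1)" "0 \<le> m - 1" using S j fin m1 by auto
    note r = ix[OF T(3) T(1) T(2)]
    have jn: "j \<le> n" using S j by auto
    have ins: "insert j ?T = ?S" using j by auto
    have "(acts (lamdual n a) j i *\<^sub>v y) $ ix n (m - 1) ?T = sg j ?S * y $ c"
      using lam_act[OF y' m_def r(1), of j] r(2) jn ins ix_eq[OF c] by simp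
    moreover have "(acts (lamdual n a) j i *\<^sub>v y) $ ix n (m - 1) ?T = 0"
      using z jn r(1) by (simp add: lam_dims m_def diff_diff_eq)
    ultimately have "sg j ?S * y $ c = (0::'k)" by simp
    then have "y $ c = 0" by (metis mult_eq_0_iff sg_nz)
    then show "y $ c = 0\<^sub>v (dims (lamdual n a :: 'k gmod) i) $ c" using c by (simp add: lam_dims m_def)
  qed (use y in simp)
qed


lemma lam_solv: "solv n (lamdual n a :: 'k::field gmod)"
  unfolding solv_def
proof (intro allI impI)
  fix i and z :: "nat \<Rightarrow> 'k vec"
  assume zc: "\<forall>j\<le>n. z j \<in> carrier_vec (dims (lamdual n a :: 'k gmod) (i+1))"
    and h1: "\<forall>j\<le>n. \<forall>l\<le>n. acts (lamdual n a) l (i+1) *\<^sub>v z j = - (acts (lamdual n a) j (i+1) *\<^sub>v z l)"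
    and h2: "\<forall>j\<le>n. acts (lamdual n a) j (i+1) *\<^sub>v z j = 0\<^sub>v (dims (lamdual n a :: 'k gmod) (i+2))"
  define m where "m = - a - i"
  have d0: "dims (lamdual n a :: 'k gmod) i = length (subs n m)" by (simp add: lam_dims m_def)
  have d1: "dims (lamdual n a :: 'k gmod) (i+1) = length (subs n (m-1))" by (simp add: lam_dims m_def diff_diff_eq)
  have d2: "dims (lamdual n a :: 'k gmod) (i+2) = length (subs n (m-2))" by (simp add: lam_dims m_def diff_diff_eq)
  have zc': "z l \<in> carrier_vec (length (subs n (m-1)))" if "l \<le> n" for l using zc that d1 by simp
  define y where "y = vec (length (subs n m)) (\<lambda>c. let S = set (subs n m ! c) in
      if S = {} then 0 else sg (Min S) S * z (Min S) $ ix n (m-1) (S - {Min S}))"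
  have yc: "y \<in> carrier_vec (length (subs n m))" unfolding y_def by simp
  have mm: "m - 1 - 1 = m - 2" by simp
  have act1: "(acts (lamdual n a) j (i+1) *\<^sub>v z l) $ r' =
     (if j \<le> n \<and> j \<notin> set (subs n (m-2) ! r')
      then sg j (insert j (set (subs n (m-2) ! r'))) * z l $ ix n (m-1) (insert j (set (subs n (m-2) ! r'))) else 0)"
    if l: "l \<le> n" and r': "r' < length (subs n (m-2))" for j l r'
  proof -
    have "m - 1 = - a - (i + 1)" by (simp add: m_def)
    from lam_act[OF zc'[OF l] this, of r' j] show ?thesis using r' unfolding mm by simp
  qed
  have act0: "(acts (lamdual n a) j i *\<^sub>v y) $ r =
     (if j \<le> n \<and> j \<notin> set (subs n (m-1) ! r)
      then sg j (insert j (set (subs n (m-1) ! r))) * y $ ix n m (insert j (set (subs n (m-1) ! r))) else 0)"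
    if r: "r < length (subs n (m-1))" for j r
    using lam_act[OF yc m_def r, of j] .
  show "\<exists>y\<in>carrier_vec (dims (lamdual n a :: 'k gmod) i). \<forall>j\<le>n. acts (lamdual n a) j i *\<^sub>v y = z j"
  proof (intro bexI[of _ y] allI impI)
    show "y \<in> carrier_vec (dims (lamdual n a :: 'k gmod) i)" using yc d0 by simp
  next
    fix j assume j: "j \<le> n"
    show "acts (lamdual n a) j i *\<^sub>v y = z j"
    proof (rule eq_vecI)
      show "dim_vec (acts (lamdual n a) j i *\<^sub>v y) = dim_vec (z j)"
        using zc'[OF j] by (simp add: lamdual_def m_def diff_diff_eq)
    next
      fix r assume "r < dim_vec (z j)"
      then have r: "r < length (subs n (m-1))" using zc'[OF j] by simp
      let ?T = "set (subs n (m-1) ! r)"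
      have T: "?T \<subseteq> {..n}" "card ?T = nat (m-1)" "0 \<le> m-1" using subs_mem[of "subs n (m-1) ! r" n "m-1"] r by auto
      have finT: "finite ?T" using T(1) finite_subset by blast
      have ixr: "ix n (m-1) ?T = r" using ix_eq[OF r] .
      show "(acts (lamdual n a) j i *\<^sub>v y) $ r = z j $ r"
      proof (cases "j \<in> ?T")
        case True
        have L: "(acts (lamdual n a) j i *\<^sub>v y) $ r = 0" using act0[OF r, of j] True by simp
        let ?U = "?T - {j}"
        have "0 < card ?T" using True finT by (intro card_gt_0_iff[THEN iffD2]) auto
        then have m2: "0 \<le> m-2" using T(2) by simp
        have U: "?U \<subseteq> {..n}" "card ?U = nat (m-2)" "0 \<le> m-2" using T True finT m2 by auto
        note r' = ix[OF U(3) U(1) U(2)]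
        have ins: "insert j ?U = ?T" using True by auto
        have "(acts (lamdual n a) j (i+1) *\<^sub>v z j) $ ix n (m-2) ?U = sg j ?T * z j $ r"
          using act1[OF j r'(1), of j] r'(2) j ins ixr by simp
        moreover have "(acts (lamdual n a) j (i+1) *\<^sub>v z j) $ ix n (m-2) ?U = 0"
          using h2 j r'(1) d2 by simp
        ultimately have "sg j ?T * z j $ r = (0::'k)" by simp
        then have "z j $ r = 0" by (metis mult_eq_0_iff sg_nz)
        then show ?thesis using L by simp
      next
        case False
        let ?S = "insert j ?T"
        have S: "?S \<subseteq> {..n}" "card ?S = nat m" "0 \<le> m" using T False finT j by auto
        have finS: "finite ?S" using finT by simp
        note c = ix[OF S(3) S(1) S(2)]
        let ?c = "ix n m ?S"
        have L: "(acts (lamdual n a) j i *\<^sub>v y) $ r = sg j ?S * y $ ?c" using act0[OF r, of j] False j by simp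
        define j0 where "j0 = Min ?S"
        have j0S: "j0 \<in> ?S" unfolding j0_def using finS by (intro Min_in) auto
        have j0j: "j0 \<le> j" unfolding j0_def using finS by (intro Min_le) auto
        have "y $ ?c = (let S = set (subs n m ! ?c) in if S = {} then 0 else sg (Min S) S * z (Min S) $ ix n (m-1) (S - {Min S}))"
          unfolding y_def using c(1) by (rule index_vec)
        then have yc': "y $ ?c = sg j0 ?S * z j0 $ ix n (m-1) (?S - {j0})"
          unfolding c(2) Let_def j0_def by simp
        show ?thesis
        proof (cases "j0 = j")
          case True
          have "?S - {j0} = ?T" using True False by auto
          then have "y $ ?c = sg j ?S * z j $ r" using yc' True ixr by simp
          then show ?thesis using L by (simp add: mult.assoc[symmetric] sg_sq)
        next
          case ne: False
          have lt: "j0 < j" using ne j0j by simp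
          have j0T: "j0 \<in> ?T" using j0S ne by simp
          have j0n: "j0 \<le> n" using j0T T(1) by auto
          let ?U = "?T - {j0}"
          have "0 < card ?T" using j0T finT by (intro card_gt_0_iff[THEN iffD2]) auto
          then have m2: "0 \<le> m-2" using T(2) by simp
          have U: "?U \<subseteq> {..n}" "card ?U = nat (m-2)" "0 \<le> m-2" using T j0T finT m2 by auto
          note r'' = ix[OF U(3) U(1) U(2)]
          let ?r = "ix n (m-2) ?U"
          have jU: "j \<notin> ?U" using False by simp
          have j0U: "j0 \<notin> ?U" by simp
          have insj: "insert j ?U = ?S - {j0}" using ne j0T False by auto
          have insj0: "insert j0 ?U = ?T" using j0T by auto
          have e1: "(acts (lamdual n a) j (i+1) *\<^sub>v z j0) $ ?r = sg j (?S - {j0}) * z j0 $ ix n (m-1) (?S - {j0})"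
            using act1[OF j0n r''(1), of j] r''(2) j jU insj by simp
          have e2: "(acts (lamdual n a) j0 (i+1) *\<^sub>v z j) $ ?r = sg j0 ?T * z j $ r"
            using act1[OF j r''(1), of j0] r''(2) j0n j0U insj0 ixr by simp
          have "acts (lamdual n a :: 'k gmod) j0 (i+1) \<in> carrier_mat (dims (lamdual n a :: 'k gmod) (i+1+1)) (dims (lamdual n a :: 'k gmod) (i+1))"
            using lam_acar j0n by (rule acarD)
          then have "dim_row (acts (lamdual n a :: 'k gmod) j0 (i+1)) = length (subs n (m-2))"
            using d2 by (simp add: add.assoc)
          then have dimr: "?r < dim_vec (acts (lamdual n a) j0 (i+1) *\<^sub>v z j)"
            using r''(1) by simp
          have "(acts (lamdual n a) j (i+1) *\<^sub>v z j0) $ ?r = (- (acts (lamdual n a) j0 (i+1) *\<^sub>v z j)) $ ?r"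
            using h1 j j0n by metis
          also have "\<dots> = - ((acts (lamdual n a) j0 (i+1) *\<^sub>v z j) $ ?r)" using dimr by simp
          finally have e3: "sg j (?S - {j0}) * z j0 $ ix n (m-1) (?S - {j0}) = - (sg j0 ?T * z j $ r)"
            using e1 e2 by simp
          have s1: "sg j (?S - {j0}) = - (sg j ?S :: 'k)" by (rule sg_remove_less[OF finS j0S lt])
          have s2: "sg j0 ?T = (sg j0 ?S :: 'k)"
          proof -
            have "?T = ?S - {j}" using False by auto
            then show ?thesis using sg_remove_greater[OF lt, of ?S] by simp
          qed
          define X where "X = z j0 $ ix n (m-1) (?S - {j0})"
          define Z where "Z = z j $ r"
          define sa :: 'k where "sa = sg j ?S"
          define sb :: 'k where "sb = sg j0 ?S"
          have e4: "sa * X = sb * Z" using e3 s1 s2 unfolding X_def Z_def sa_def sb_def by simp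
          have "(acts (lamdual n a) j i *\<^sub>v y) $ r = sa * (sb * X)" using L yc' unfolding X_def sa_def sb_def by simp
          also have "\<dots> = sb * (sa * X)" by (simp add: ac_simps)
          also have "\<dots> = (sb * sb) * Z" using e4 by (simp add: ac_simps)
          also have "\<dots> = Z" unfolding sb_def by (simp add: sg_sq)
          finally show ?thesis unfolding Z_def .
        qed
      qed
    qed
  qed
qed


lemma vec0_eq: "(u :: 'a vec) \<in> carrier_vec 0 \<Longrightarrow> v \<in> carrier_vec 0 \<Longrightarrow> u = v"
  by (rule eq_vecI) auto

lemma zero_vec_append: "0\<^sub>v (k + l) = (0\<^sub>v k @\<^sub>v 0\<^sub>v l :: 'a::zero vec)"
  by (rule eq_vecI) (auto simp: append_vec_def)

lemma uminus_append_vec: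
  fixes a :: "'a::ab_group_add vec"
  assumes "a \<in> carrier_vec k" "b \<in> carrier_vec l"
  shows "- (a @\<^sub>v b) = (- a) @\<^sub>v (- b)"
  by (rule eq_vecI) (use assms in \<open>auto simp: append_vec_def\<close>)

lemma zmv: "w \<in> carrier_vec c \<Longrightarrow> 0\<^sub>m r c *\<^sub>v w = (0\<^sub>v r :: 'a::semiring_0 vec)"
  by (rule eq_vecI) (auto simp: scalar_prod_def)

lemma gsum_dims: "dims (gsum M N) i = dims M i + dims N i"
  by (simp add: gsum_def)

lemma gsum_acar: "acar n M \<Longrightarrow> acar n N \<Longrightarrow> acar n (gsum M N)"
  unfolding acar_def gsum_def by (auto intro!: four_block_carrier_mat)

lemma gzero_acar: "acar n gzero"
  unfolding acar_def gzero_def by auto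

lemma gsum_act:
  fixes M N :: "'k::field gmod"
  assumes aM: "acar n M" and aN: "acar n N" and j: "j \<le> n"
    and u: "u \<in> carrier_vec (dims M i)" and w: "w \<in> carrier_vec (dims N i)"
  shows "acts (gsum M N) j i *\<^sub>v (u @\<^sub>v w) = (acts M j i *\<^sub>v u) @\<^sub>v (acts N j i *\<^sub>v w)"
proof -
  have A: "acts M j i \<in> carrier_mat (dims M (i+1)) (dims M i)" using acarD[OF aM j] .
  have B: "acts N j i \<in> carrier_mat (dims N (i+1)) (dims N i)" using acarD[OF aN j] .
  have "acts (gsum M N) j i *\<^sub>v (u @\<^sub>v w) =
     (acts M j i *\<^sub>v u + 0\<^sub>m (dims M (i+1)) (dims N i) *\<^sub>v w) @\<^sub>v (0\<^sub>m (dims N (i+1)) (dims M i) *\<^sub>v u + acts N j i *\<^sub>v w)"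
    unfolding gsum_def using four_block_mat_mult_vec[OF A _ _ B u w] by simp
  also have "\<dots> = (acts M j i *\<^sub>v u) @\<^sub>v (acts N j i *\<^sub>v w)" using A B u w by (simp add: zmv)
  finally show ?thesis .
qed

lemma gsum_soc:
  fixes M N :: "'k::field gmod"
  assumes aM: "acar n M" and aN: "acar n N" and sM: "soc n M D" and sN: "soc n N D"
  shows "soc n (gsum M N) D"
  unfolding soc_def
proof (intro allI impI ballI)
  fix i and y :: "'k vec" assume i: "i < D" and y: "y \<in> carrier_vec (dims (gsum M N) i)"
    and z: "\<forall>j\<le>n. acts (gsum M N) j i *\<^sub>v y = 0\<^sub>v (dims (gsum M N) (i + 1))"
  define u where "u = vec_first y (dims M i)"
  define w where "w = vec_last y (dims N i)"
  have yuw: "y = u @\<^sub>v w" unfolding u_def w_def using y by (simp add: gsum_dims)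
  have u: "u \<in> carrier_vec (dims M i)" and w: "w \<in> carrier_vec (dims N i)" unfolding u_def w_def by auto
  have "\<forall>j\<le>n. acts M j i *\<^sub>v u = 0\<^sub>v (dims M (i+1)) \<and> acts N j i *\<^sub>v w = 0\<^sub>v (dims N (i+1))"
  proof (intro allI impI)
    fix j assume j: "j \<le> n"
    have "(acts M j i *\<^sub>v u) @\<^sub>v (acts N j i *\<^sub>v w) = 0\<^sub>v (dims M (i+1)) @\<^sub>v 0\<^sub>v (dims N (i+1))"
      using z j gsum_act[OF aM aN j u w] yuw by (simp add: gsum_dims zero_vec_append)
    moreover have "acts M j i *\<^sub>v u \<in> carrier_vec (dims M (i+1))" using acarD[OF aM j, of i] u by simp
    ultimately show "acts M j i *\<^sub>v u = 0\<^sub>v (dims M (i+1)) \<and> acts N j i *\<^sub>v w = 0\<^sub>v (dims N (i+1))"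
      by (subst (asm) append_vec_eq) auto
  qed
  then have "u = 0\<^sub>v (dims M i)" "w = 0\<^sub>v (dims N i)" using sM sN i u w unfolding soc_def by auto
  then show "y = 0\<^sub>v (dims (gsum M N) i)" using yuw by (simp add: gsum_dims zero_vec_append)
qed

lemma gsum_solv:
  fixes M N :: "'k::field gmod"
  assumes aM: "acar n M" and aN: "acar n N" and sM: "solv n M" and sN: "solv n N"
  shows "solv n (gsum M N)"
  unfolding solv_def
proof (intro allI impI)
  fix i and z :: "nat \<Rightarrow> 'k vec"
  assume zc: "\<forall>j\<le>n. z j \<in> carrier_vec (dims (gsum M N) (i+1))"
    and h1: "\<forall>j\<le>n. \<forall>l\<le>n. acts (gsum M N) l (i+1) *\<^sub>v z j = - (acts (gsum M N) j (i+1) *\<^sub>v z l)"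
    and h2: "\<forall>j\<le>n. acts (gsum M N) j (i+1) *\<^sub>v z j = 0\<^sub>v (dims (gsum M N) (i+2))"
  define u where "u j = vec_first (z j) (dims M (i+1))" for j
  define w where "w j = vec_last (z j) (dims N (i+1))" for j
  have zuw: "z j = u j @\<^sub>v w j" if "j \<le> n" for j
    unfolding u_def w_def using zc that by (simp add: gsum_dims)
  have u: "u j \<in> carrier_vec (dims M (i+1))" and w: "w j \<in> carrier_vec (dims N (i+1))" for j
    unfolding u_def w_def by auto
  have AM: "acts M j (i+1) \<in> carrier_mat (dims M (i+2)) (dims M (i+1))" if "j \<le> n" for j
    using acarD[OF aM that, of "i+1"] by (simp add: add.assoc)
  have AN: "acts N j (i+1) \<in> carrier_mat (dims N (i+2)) (dims N (i+1))" if "j \<le> n" for j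
    using acarD[OF aN that, of "i+1"] by (simp add: add.assoc)
  have act: "acts (gsum M N) l (i+1) *\<^sub>v z j = (acts M l (i+1) *\<^sub>v u j) @\<^sub>v (acts N l (i+1) *\<^sub>v w j)"
    if "j \<le> n" "l \<le> n" for j l
    using gsum_act[OF aM aN that(2) u w] zuw[OF that(1)] by simp
  have c1: "\<forall>j\<le>n. \<forall>l\<le>n. acts M l (i+1) *\<^sub>v u j = - (acts M j (i+1) *\<^sub>v u l) \<and>
                          acts N l (i+1) *\<^sub>v w j = - (acts N j (i+1) *\<^sub>v w l)"
  proof (intro allI impI)
    fix j l assume j: "j \<le> n" and l: "l \<le> n"
    have "(acts M l (i+1) *\<^sub>v u j) @\<^sub>v (acts N l (i+1) *\<^sub>v w j) = acts (gsum M N) l (i+1) *\<^sub>v z j"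
      using act[OF j l] by simp
    also have "\<dots> = - (acts (gsum M N) j (i+1) *\<^sub>v z l)" using h1[rule_format, OF j l] .
    also have "\<dots> = - ((acts M j (i+1) *\<^sub>v u l) @\<^sub>v (acts N j (i+1) *\<^sub>v w l))" using act[OF l j] by simp
    also have "\<dots> = (- (acts M j (i+1) *\<^sub>v u l)) @\<^sub>v (- (acts N j (i+1) *\<^sub>v w l))"
      by (rule uminus_append_vec[OF mult_mat_vec_carrier[OF AM[OF j] u] mult_mat_vec_carrier[OF AN[OF j] w]])
    finally have eq: "(acts M l (i+1) *\<^sub>v u j) @\<^sub>v (acts N l (i+1) *\<^sub>v w j) =
          (- (acts M j (i+1) *\<^sub>v u l)) @\<^sub>v (- (acts N j (i+1) *\<^sub>v w l))" .
    have ca: "acts M l (i+1) *\<^sub>v u j \<in> carrier_vec (dims M (i+2))" using AM[OF l] u by simp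
    have cb: "- (acts M j (i+1) *\<^sub>v u l) \<in> carrier_vec (dims M (i+2))" using AM[OF j] u by simp
    from eq show "acts M l (i+1) *\<^sub>v u j = - (acts M j (i+1) *\<^sub>v u l) \<and>
                          acts N l (i+1) *\<^sub>v w j = - (acts N j (i+1) *\<^sub>v w l)"
      by (simp only: append_vec_eq[OF ca cb])
  qed
  have c2: "\<forall>j\<le>n. acts M j (i+1) *\<^sub>v u j = 0\<^sub>v (dims M (i+2)) \<and> acts N j (i+1) *\<^sub>v w j = 0\<^sub>v (dims N (i+2))"
  proof (intro allI impI)
    fix j assume j: "j \<le> n"
    have "(acts M j (i+1) *\<^sub>v u j) @\<^sub>v (acts N j (i+1) *\<^sub>v w j) = 0\<^sub>v (dims M (i+2)) @\<^sub>v 0\<^sub>v (dims N (i+2))"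
      using h2 j act[OF j j] by (simp add: gsum_dims zero_vec_append)
    moreover have ca: "acts M j (i+1) *\<^sub>v u j \<in> carrier_vec (dims M (i+2))" using AM[OF j] u by simp
    moreover have cb: "0\<^sub>v (dims M (i+2)) \<in> carrier_vec (dims M (i+2))" by simp
    ultimately show "acts M j (i+1) *\<^sub>v u j = 0\<^sub>v (dims M (i+2)) \<and> acts N j (i+1) *\<^sub>v w j = 0\<^sub>v (dims N (i+2))"
      by (simp only: append_vec_eq[OF ca cb])
  qed
  have "\<exists>y\<in>carrier_vec (dims M i). \<forall>j\<le>n. acts M j i *\<^sub>v y = u j"
  proof (rule sM[unfolded solv_def, rule_format])
    show "\<And>j. j \<le> n \<Longrightarrow> u j \<in> carrier_vec (dims M (i+1))" using u by simp
    show "\<And>j l. j \<le> n \<Longrightarrow> l \<le> n \<Longrightarrow> acts M l (i+1) *\<^sub>v u j = - (acts M j (i+1) *\<^sub>v u l)"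
      by (rule conjunct1[OF c1[rule_format]])
    show "\<And>j. j \<le> n \<Longrightarrow> acts M j (i+1) *\<^sub>v u j = 0\<^sub>v (dims M (i+2))" by (rule conjunct1[OF c2[rule_format]])
  qed
  then obtain yM where yM: "yM \<in> carrier_vec (dims M i)" "\<forall>j\<le>n. acts M j i *\<^sub>v yM = u j" by blast
  have "\<exists>y\<in>carrier_vec (dims N i). \<forall>j\<le>n. acts N j i *\<^sub>v y = w j"
  proof (rule sN[unfolded solv_def, rule_format])
    show "\<And>j. j \<le> n \<Longrightarrow> w j \<in> carrier_vec (dims N (i+1))" using w by simp
    show "\<And>j l. j \<le> n \<Longrightarrow> l \<le> n \<Longrightarrow> acts N l (i+1) *\<^sub>v w j = - (acts N j (i+1) *\<^sub>v w l)"
      by (rule conjunct2[OF c1[rule_format]])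
    show "\<And>j. j \<le> n \<Longrightarrow> acts N j (i+1) *\<^sub>v w j = 0\<^sub>v (dims N (i+2))" by (rule conjunct2[OF c2[rule_format]])
  qed
  then obtain yN where yN: "yN \<in> carrier_vec (dims N i)" "\<forall>j\<le>n. acts N j i *\<^sub>v yN = w j" by blast
  show "\<exists>y\<in>carrier_vec (dims (gsum M N) i). \<forall>j\<le>n. acts (gsum M N) j i *\<^sub>v y = z j"
  proof (rule bexI[of _ "yM @\<^sub>v yN"])
    show "\<forall>j\<le>n. acts (gsum M N) j i *\<^sub>v (yM @\<^sub>v yN) = z j"
    proof (intro allI impI)
      fix j assume j: "j \<le> n"
      show "acts (gsum M N) j i *\<^sub>v (yM @\<^sub>v yN) = z j"
        using gsum_act[OF aM aN j yM(1) yN(1)] yM(2) yN(2) j zuw[OF j] by simp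
    qed
    show "yM @\<^sub>v yN \<in> carrier_vec (dims (gsum M N) i)" using yM yN by (simp add: gsum_dims)
  qed
qed

lemma gzero_soc: "soc n (gzero :: 'k::field gmod) D"
  unfolding soc_def
proof (intro allI impI ballI)
  fix i and y :: "'k vec" assume "y \<in> carrier_vec (dims (gzero :: 'k gmod) i)"
  then have "y \<in> carrier_vec 0" by (simp add: gzero_def)
  moreover have "0\<^sub>v (dims (gzero :: 'k gmod) i) \<in> carrier_vec 0" by (simp add: gzero_def)
  ultimately show "y = 0\<^sub>v (dims (gzero :: 'k gmod) i)" by (rule vec0_eq)
qed

lemma gzero_solv: "solv n (gzero :: 'k::field gmod)"
  unfolding solv_def
proof (intro allI impI)
  fix i and z :: "nat \<Rightarrow> 'k vec"
  assume zc: "\<forall>j\<le>n. z j \<in> carrier_vec (dims (gzero :: 'k gmod) (i+1))"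
  show "\<exists>y\<in>carrier_vec (dims (gzero :: 'k gmod) i). \<forall>j\<le>n. acts gzero j i *\<^sub>v y = z j"
  proof (rule bexI[of _ "0\<^sub>v 0"])
    show "0\<^sub>v 0 \<in> carrier_vec (dims (gzero :: 'k gmod) i)" by (simp add: gzero_def)
    show "\<forall>j\<le>n. acts gzero j i *\<^sub>v 0\<^sub>v 0 = z j"
    proof (intro allI impI)
      fix j assume j: "j \<le> n"
      have "z j \<in> carrier_vec (dims (gzero::'k gmod) (i+1))" using zc[rule_format, OF j] .
      moreover have "dims (gzero :: 'k gmod) (i+1) = 0" by (simp add: gzero_def)
      ultimately have zj: "z j \<in> carrier_vec 0" by simp
      have A: "acts (gzero :: 'k gmod) j i = 0\<^sub>m 0 0" by (simp add: gzero_def)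
      have C: "(0\<^sub>m 0 0 :: 'k mat) *\<^sub>v 0\<^sub>v 0 \<in> carrier_vec 0" by (rule mult_mat_vec_carrier) auto
      have e: "acts (gzero :: 'k gmod) j i *\<^sub>v 0\<^sub>v 0 \<in> carrier_vec 0" unfolding A by (rule C)
      show "acts gzero j i *\<^sub>v 0\<^sub>v 0 = z j" by (rule vec0_eq[OF e zj])
    qed
  qed
qed


lemma mvz: "A \<in> carrier_mat r c \<Longrightarrow> A *\<^sub>v 0\<^sub>v c = (0\<^sub>v r :: 'a::semiring_0 vec)"
  by (rule eq_vecI) (auto simp: scalar_prod_def)

lemma mv_uminus:
  fixes A :: "'a::ring mat"
  assumes "A \<in> carrier_mat r c" "v \<in> carrier_vec c"
  shows "A *\<^sub>v (- v) = - (A *\<^sub>v v)"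
  by (rule eq_vecI) (use assms in auto)

lemma gisoE:
  assumes "giso n M N"
  obtains f g where "gmap n M N f" "gmap n N M g" "\<forall>i. g i * f i = 1\<^sub>m (dims M i)" "\<forall>i. f i * g i = 1\<^sub>m (dims N i)"
  using assms unfolding giso_def by blast

lemma giso_dims0:
  fixes M N :: "'k::field gmod"
  assumes iso: "giso n M N" and z: "dims M i = 0"
  shows "dims N i = 0"
proof (rule ccontr)
  assume nz: "dims N i \<noteq> 0"
  obtain f g where f: "gmap n M N f" and g: "gmap n N M g" and gf': "\<forall>i. g i * f i = 1\<^sub>m (dims M i)"
    and fg': "\<forall>i. f i * g i = 1\<^sub>m (dims N i)"
    by (rule gisoE[OF iso])
  note gf = gf'[rule_format] and fg = fg'[rule_format]
  have fc: "f i \<in> carrier_mat (dims N i) 0" using gmapD1[OF f, of i] z by simp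
  have gc: "g i \<in> carrier_mat 0 (dims N i)" using gmapD1[OF g, of i] z by simp
  have "(f i * g i) $$ (0, 0) = (0::'k)" using fc gc nz by (simp add: scalar_prod_def)
  moreover have "(1\<^sub>m (dims N i) :: 'k mat) $$ (0, 0) = 1" using nz by simp
  ultimately show False using fg[of i] by simp
qed

lemma giso_soc:
  fixes M N :: "'k::field gmod"
  assumes iso: "giso n M N" and aM: "acar n M" and aN: "acar n N" and sN: "soc n N D"
  shows "soc n M D"
  unfolding soc_def
proof (intro allI impI ballI)
  fix i and y :: "'k vec" assume i: "i < D" and y: "y \<in> carrier_vec (dims M i)"
    and z: "\<forall>j\<le>n. acts M j i *\<^sub>v y = 0\<^sub>v (dims M (i + 1))"
  obtain f g where f: "gmap n M N f" and g: "gmap n N M g" and gf': "\<forall>i. g i * f i = 1\<^sub>m (dims M i)"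
    and fg': "\<forall>i. f i * g i = 1\<^sub>m (dims N i)"
    by (rule gisoE[OF iso])
  note gf = gf'[rule_format] and fg = fg'[rule_format]
  have fi: "f i \<in> carrier_mat (dims N i) (dims M i)" using gmapD1[OF f] .
  have fi1: "f (i+1) \<in> carrier_mat (dims N (i+1)) (dims M (i+1))" using gmapD1[OF f] .
  have gi: "g i \<in> carrier_mat (dims M i) (dims N i)" using gmapD1[OF g] .
  have "\<forall>j\<le>n. acts N j i *\<^sub>v (f i *\<^sub>v y) = 0\<^sub>v (dims N (i + 1))"
  proof (intro allI impI)
    fix j assume j: "j \<le> n"
    have AM: "acts M j i \<in> carrier_mat (dims M (i+1)) (dims M i)" using acarD[OF aM j] .
    have AN: "acts N j i \<in> carrier_mat (dims N (i+1)) (dims N i)" using acarD[OF aN j] .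
    have "acts N j i *\<^sub>v (f i *\<^sub>v y) = (acts N j i * f i) *\<^sub>v y" using AN fi y by simp
    also have "acts N j i * f i = f (i+1) * acts M j i" using gmapD2[OF f j] by simp
    also have "(f (i+1) * acts M j i) *\<^sub>v y = f (i+1) *\<^sub>v (acts M j i *\<^sub>v y)" using fi1 AM y by simp
    also have "\<dots> = f (i+1) *\<^sub>v 0\<^sub>v (dims M (i+1))" using z j by simp
    also have "\<dots> = 0\<^sub>v (dims N (i+1))" using fi1 by (rule mvz)
    finally show "acts N j i *\<^sub>v (f i *\<^sub>v y) = 0\<^sub>v (dims N (i + 1))" .
  qed
  moreover have "f i *\<^sub>v y \<in> carrier_vec (dims N i)" using fi y by simp
  ultimately have fy: "f i *\<^sub>v y = 0\<^sub>v (dims N i)" using sN i unfolding soc_def by blast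
  have "y = (g i * f i) *\<^sub>v y" using gf[of i] y by simp
  also have "\<dots> = g i *\<^sub>v (f i *\<^sub>v y)" using gi fi y by simp
  also have "\<dots> = 0\<^sub>v (dims M i)" unfolding fy using gi by (rule mvz)
  finally show "y = 0\<^sub>v (dims M i)" .
qed

lemma giso_solv:
  fixes M N :: "'k::field gmod"
  assumes iso: "giso n M N" and aM: "acar n M" and aN: "acar n N" and sN: "solv n N"
  shows "solv n M"
  unfolding solv_def
proof (intro allI impI)
  fix i and z :: "nat \<Rightarrow> 'k vec"
  assume zc: "\<forall>j\<le>n. z j \<in> carrier_vec (dims M (i+1))"
    and h1: "\<forall>j\<le>n. \<forall>l\<le>n. acts M l (i+1) *\<^sub>v z j = - (acts M j (i+1) *\<^sub>v z l)"
    and h2: "\<forall>j\<le>n. acts M j (i+1) *\<^sub>v z j = 0\<^sub>v (dims M (i+2))"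
  obtain f g where f: "gmap n M N f" and g: "gmap n N M g" and gf': "\<forall>i. g i * f i = 1\<^sub>m (dims M i)"
    and fg': "\<forall>i. f i * g i = 1\<^sub>m (dims N i)"
    by (rule gisoE[OF iso])
  note gf = gf'[rule_format] and fg = fg'[rule_format]
  have fi1: "f (i+1) \<in> carrier_mat (dims N (i+1)) (dims M (i+1))" using gmapD1[OF f] .
  have fi2: "f (i+2) \<in> carrier_mat (dims N (i+2)) (dims M (i+2))" using gmapD1[OF f] .
  have gi: "g i \<in> carrier_mat (dims M i) (dims N i)" using gmapD1[OF g] .
  have gi1: "g (i+1) \<in> carrier_mat (dims M (i+1)) (dims N (i+1))" using gmapD1[OF g] .
  have AM1: "acts M l (i+1) \<in> carrier_mat (dims M (i+2)) (dims M (i+1))" if "l \<le> n" for l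
    using acarD[OF aM that, of "i+1"] by (simp add: add.assoc)
  have AN1: "acts N l (i+1) \<in> carrier_mat (dims N (i+2)) (dims N (i+1))" if "l \<le> n" for l
    using acarD[OF aN that, of "i+1"] by (simp add: add.assoc)
  have comm1: "acts N l (i+1) * f (i+1) = f (i+2) * acts M l (i+1)" if "l \<le> n" for l
    using gmapD2[OF f that, of "i+1"] by (simp add: add.assoc)
  define w where "w j = f (i+1) *\<^sub>v z j" for j
  have wc: "w j \<in> carrier_vec (dims N (i+1))" if "j \<le> n" for j
    unfolding w_def using fi1 zc that by simp
  have wa: "acts N l (i+1) *\<^sub>v w j = f (i+2) *\<^sub>v (acts M l (i+1) *\<^sub>v z j)" if "j \<le> n" "l \<le> n" for j l
  proof -
    have "acts N l (i+1) *\<^sub>v w j = (acts N l (i+1) * f (i+1)) *\<^sub>v z j"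
      unfolding w_def using AN1[OF that(2)] fi1 zc that(1) by simp
    also have "\<dots> = (f (i+2) * acts M l (i+1)) *\<^sub>v z j" using comm1[OF that(2)] by simp
    also have "\<dots> = f (i+2) *\<^sub>v (acts M l (i+1) *\<^sub>v z j)" using fi2 AM1[OF that(2)] zc that(1) by simp
    finally show ?thesis .
  qed
  have "\<exists>y\<in>carrier_vec (dims N i). \<forall>j\<le>n. acts N j i *\<^sub>v y = w j"
  proof (rule sN[unfolded solv_def, rule_format])
    show "\<And>j. j \<le> n \<Longrightarrow> w j \<in> carrier_vec (dims N (i+1))" by (rule wc)
  next
    fix j l assume j: "j \<le> n" and l: "l \<le> n"
    have "acts N l (i+1) *\<^sub>v w j = f (i+2) *\<^sub>v (- (acts M j (i+1) *\<^sub>v z l))"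
      using wa[OF j l] h1[rule_format, OF j l] by simp
    also have "\<dots> = - (f (i+2) *\<^sub>v (acts M j (i+1) *\<^sub>v z l))"
      by (rule mv_uminus[OF fi2]) (use AM1[OF j] zc l in simp)
    also have "\<dots> = - (acts N j (i+1) *\<^sub>v w l)" using wa[OF l j] by simp
    finally show "acts N l (i+1) *\<^sub>v w j = - (acts N j (i+1) *\<^sub>v w l)" .
  next
    fix j assume j: "j \<le> n"
    have "acts N j (i+1) *\<^sub>v w j = f (i+2) *\<^sub>v 0\<^sub>v (dims M (i+2))"
      using wa[OF j j] h2[rule_format, OF j] by simp
    also have "\<dots> = 0\<^sub>v (dims N (i+2))" using fi2 by (rule mvz)
    finally show "acts N j (i+1) *\<^sub>v w j = 0\<^sub>v (dims N (i+2))" .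
  qed
  then obtain y' where y': "y' \<in> carrier_vec (dims N i)" "\<forall>j\<le>n. acts N j i *\<^sub>v y' = w j" by blast
  show "\<exists>y\<in>carrier_vec (dims M i). \<forall>j\<le>n. acts M j i *\<^sub>v y = z j"
  proof (rule bexI[of _ "g i *\<^sub>v y'"])
    show "g i *\<^sub>v y' \<in> carrier_vec (dims M i)" using gi y' by simp
    show "\<forall>j\<le>n. acts M j i *\<^sub>v (g i *\<^sub>v y') = z j"
    proof (intro allI impI)
      fix j assume j: "j \<le> n"
      have AM: "acts M j i \<in> carrier_mat (dims M (i+1)) (dims M i)" using acarD[OF aM j] .
      have AN: "acts N j i \<in> carrier_mat (dims N (i+1)) (dims N i)" using acarD[OF aN j] .
      have "acts M j i *\<^sub>v (g i *\<^sub>v y') = (acts M j i * g i) *\<^sub>v y'" using AM gi y' by simp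
      also have "acts M j i * g i = g (i+1) * acts N j i" using gmapD2[OF g j] by simp
      also have "(g (i+1) * acts N j i) *\<^sub>v y' = g (i+1) *\<^sub>v w j" using gi1 AN y' j by simp
      also have "\<dots> = (g (i+1) * f (i+1)) *\<^sub>v z j" unfolding w_def using gi1 fi1 zc j by simp
      also have "\<dots> = z j" using gf[of "i+1"] zc j by simp
      finally show "acts M j i *\<^sub>v (g i *\<^sub>v y') = z j" .
    qed
  qed
qed

abbreviation fsum :: "nat \<Rightarrow> int list \<Rightarrow> 'k::field gmod" where
  "fsum n as \<equiv> foldr (\<lambda>a R. gsum (lamdual n a) R) as gzero"

lemma fsum_acar: "acar n (fsum n as :: 'k::field gmod)"
  by (induction as) (auto intro: gsum_acar lam_acar gzero_acar)

lemma fsum_solv: "solv n (fsum n as :: 'k::field gmod)"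
  by (induction as) (auto intro: gsum_solv lam_acar fsum_acar lam_solv gzero_solv)

lemma fsum_soc:
  assumes "\<And>i. i \<le> B \<Longrightarrow> dims (fsum n as :: 'k::field gmod) i = 0"
  shows "soc n (fsum n as :: 'k gmod) (B + int n + 2)"
  using assms
proof (induction as)
  case Nil then show ?case by (simp add: gzero_soc)
next
  case (Cons a as)
  have d: "dims (lamdual n a :: 'k gmod) i = 0 \<and> dims (fsum n as :: 'k gmod) i = 0" if "i \<le> B" for i
    using Cons.prems[OF that] by (simp add: gsum_dims)
  have "\<not> (- a - int n - 1 \<le> B)"
  proof
    assume h: "- a - int n - 1 \<le> B"
    have "dims (lamdual n a :: 'k gmod) (- a - int n - 1) = length (subs n (int n + 1))"
      by (simp add: lam_dims)
    then show False using d[OF h] subs_full[of n] by simp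
  qed
  then have "B + int n + 2 \<le> - a" by simp
  then have s1: "soc n (lamdual n a :: 'k gmod) (B + int n + 2)" by (rule lam_soc)
  have s2: "soc n (fsum n as :: 'k gmod) (B + int n + 2)" using Cons.IH d by blast
  show ?case using gsum_soc[OF lam_acar fsum_acar s1 s2] by simp
qed

lemma I_soc:
  fixes I :: "'k::field cplx"
  assumes wI: "cplx_wf n I" and fr: "free_gmod n (cmod I p)" and F0: "F0_zero n I"
  shows "soc n (cmod I p) (- p + 1)"
proof -
  obtain as where iso: "giso n (cmod I p) (fsum n as :: 'k gmod)" using fr unfolding free_gmod_def by blast
  have "dims (fsum n as :: 'k gmod) i = 0" if "i \<le> - p - int n - 1" for i
    using giso_dims0[OF iso] F0 that unfolding F0_zero_def by blast
  then have "soc n (fsum n as :: 'k gmod) ((- p - int n - 1) + int n + 2)" by (rule fsum_soc)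
  then have "soc n (fsum n as :: 'k gmod) (- p + 1)" by simp
  then show ?thesis by (rule giso_soc[OF iso wf_acar[OF wf_mod[OF wI]] fsum_acar])
qed

lemma I_solv:
  fixes I :: "'k::field cplx"
  assumes wI: "cplx_wf n I" and fr: "free_gmod n (cmod I p)"
  shows "solv n (cmod I p)"
proof -
  obtain as where iso: "giso n (cmod I p) (fsum n as :: 'k gmod)" using fr unfolding free_gmod_def by blast
  show ?thesis by (rule giso_solv[OF iso wf_acar[OF wf_mod[OF wI]] fsum_acar fsum_solv])
qed

theorem lemma3p1:
  fixes n :: nat and I K :: "'k::field cplx"
  assumes "n \<ge> 2"
    and "cplx_wf n I" and "bounded_cplx I" and "\<forall>p. free_gmod n (cmod I p)"
    and "F0_zero n I"
    and "cplx_wf n K" and "bounded_cplx K"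
  shows "bij_betw (\<lambda>f. cm_comp f (incl K)) (HomC n K I) (HomC n (sigma K) I)
       \<and> bij_betw (\<lambda>c. \<Union>f\<in>c. htp n (sigma K) I `` {cm_comp f (incl K)})
                 (HomK n K I) (HomK n (sigma K) I)"
proof (rule main_gen[OF assms(2) assms(6)])
  fix p
  show "soc n (cmod I p) (- p + 1)" using I_soc[OF assms(2) _ assms(5)] assms(4) by blast
  show "solv n (cmod I p)" using I_solv[OF assms(2)] assms(4) by blast
qed


end
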